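(* Let $K$ be an algebraically closed field with $\operatorname{char}K\neq 3$, let $\varepsilon$ be a primitive cube root of $1$, and let $p\in K\langle x_1,\dots,x_m\rangle$ be a multilinear polynomial which on $M_3(K)$ is neither a polynomial identity nor a central polynomial. Then every $3$-scalar matrix in $M_3(K)$ (i.e. every matrix with eigenvalues $\gamma,\gamma\varepsilon,\gamma\varepsilon^2$ for some $\gamma\in K$, including all nilpotent matrices) belongs to $\operatorname{Im} p$.
   Context: A polynomial is multilinear if it has the form $\sum_{\sigma\in S_m}c_\sigma x_{\sigma(1)}\cdots x_{\sigma(m)}$. $p$ is a polynomial identity of $M_3(K)$ if all its values are $0$, and a central polynomial if all its values are scalar matrices but it is not a polynomial identity. *)

theory Defs
  imports "HOL-Analysis.Analysis" "HOL-Computational_Algebra.Polynomial"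
begin

text \<open>Evaluation of the multilinear polynomial
  p = sum over sigma in S_m of c sigma * x_sigma(0) ... x_sigma(m-1)
  (variables indexed 0..m-1) at a tuple of 3x3 matrices A 0, ..., A (m-1).\<close>
definition mlin_eval :: "nat \<Rightarrow> ((nat \<Rightarrow> nat) \<Rightarrow> 'a::field) \<Rightarrow> (nat \<Rightarrow> 'a^3^3) \<Rightarrow> 'a^3^3" where
  "mlin_eval m c A =
     (\<Sum>\<sigma> \<in> {\<sigma>. \<sigma> permutes {..<m}}.
        (\<chi> i j. c \<sigma> * (foldr (\<lambda>k B. A (\<sigma> k) ** B) [0..<m] (mat 1)) $ i $ j))"

definition is_PI :: "nat \<Rightarrow> ((nat \<Rightarrow> nat) \<Rightarrow> 'a::field) \<Rightarrow> bool" where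
  "is_PI m c \<longleftrightarrow> (\<forall>A :: nat \<Rightarrow> 'a^3^3. mlin_eval m c A = 0)"

definition is_central :: "nat \<Rightarrow> ((nat \<Rightarrow> nat) \<Rightarrow> 'a::field) \<Rightarrow> bool" where
  "is_central m c \<longleftrightarrow> (\<forall>A :: nat \<Rightarrow> 'a^3^3. \<exists>s. mlin_eval m c A = mat s) \<and> \<not> is_PI m c"

definition image_poly :: "nat \<Rightarrow> ((nat \<Rightarrow> nat) \<Rightarrow> 'a::field) \<Rightarrow> ('a^3^3) set" where
  "image_poly m c = range (mlin_eval m c)"

definition charpoly3 :: "'a::field^3^3 \<Rightarrow> 'a poly" where
  "charpoly3 M = det (\<chi> i j. (if i = j then [:0, 1:] else 0) - [: M $ i $ j :])"

definition three_scalar :: "'a::field \<Rightarrow> 'a^3^3 \<Rightarrow> bool" where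
  "three_scalar eps M \<longleftrightarrow> (\<exists>\<gamma>. charpoly3 M = (\<Prod>k<3. [: -(\<gamma> * eps ^ k), 1 :]))"

end

theory Submission
  imports Defs
begin

definition smat :: "'a::field \<Rightarrow> 'a^3^3 \<Rightarrow> 'a^3^3" where
  "smat a F = (\<chi> i j. a * F$i$j)"

lemma smat_nth[simp]: "smat a F $ i $ j = a * F$i$j"
  by (simp add: smat_def)

lemma smat_smat[simp]: "smat a (smat b F) = smat (a*b) F"
  by (simp add: vec_eq_iff mult.assoc)

lemma smat_1[simp]: "smat 1 F = F"
  by (simp add: vec_eq_iff)

lemma smat_0[simp]: "smat 0 F = 0"
  by (simp add: vec_eq_iff)

lemma smat_zero[simp]: "smat a 0 = 0"
  by (simp add: vec_eq_iff)

lemma smat_add: "smat a (F + G) = smat a F + smat a G"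
  by (simp add: vec_eq_iff algebra_simps)

lemma smat_add_left: "smat (a + b) F = smat a F + smat b F"
  by (simp add: vec_eq_iff algebra_simps)

lemma smat_sum: "smat a (sum f S) = (\<Sum>x\<in>S. smat a (f x))"
  by (induction S rule: infinite_finite_induct) (auto simp: smat_add)

lemma smat_sum_left: "smat (sum f S) F = (\<Sum>x\<in>S. smat (f x) F)"
  by (induction S rule: infinite_finite_induct) (auto simp: smat_add_left)

lemma smat_mult_left: "smat a F ** G = smat a (F ** G)"
  by (simp add: vec_eq_iff matrix_matrix_mult_def sum_distrib_left mult.assoc)

lemma smat_mult_right: "F ** smat a G = smat a (F ** G)"
  by (simp add: vec_eq_iff matrix_matrix_mult_def sum_distrib_left algebra_simps)

lemma smat_mat: "smat a (mat b) = mat (a * b)"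
  by (simp add: vec_eq_iff mat_def)

lemma smat_eq_0_iff: "smat a F = 0 \<longleftrightarrow> a = 0 \<or> F = 0"
  by (auto simp: vec_eq_iff)

lemma mm_add_rdistrib: "(A + B) ** (C::'a::field^3^3) = A ** C + B ** C"
  by (simp add: vec_eq_iff matrix_matrix_mult_def sum.distrib algebra_simps)

lemma mm_zero_left[simp]: "(0::'a::field^3^3) ** C = 0"
  by (simp add: vec_eq_iff matrix_matrix_mult_def)

lemma mm_zero_right[simp]: "C ** (0::'a::field^3^3) = 0"
  by (simp add: vec_eq_iff matrix_matrix_mult_def)

definition pl :: "(nat \<Rightarrow> 'a::field^3^3) \<Rightarrow> (nat \<Rightarrow> nat) \<Rightarrow> nat list \<Rightarrow> 'a^3^3" where
  "pl A \<sigma> xs = foldr (\<lambda>k B. A (\<sigma> k) ** B) xs (mat 1)"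

lemma pl_Nil[simp]: "pl A \<sigma> [] = mat 1" by (simp add: pl_def)
lemma pl_Cons[simp]: "pl A \<sigma> (x # xs) = A (\<sigma> x) ** pl A \<sigma> xs" by (simp add: pl_def)

lemma mlin_eval_alt:
  "mlin_eval m c A = (\<Sum>\<sigma>\<in>{\<sigma>. \<sigma> permutes {..<m}}. smat (c \<sigma>) (pl A \<sigma> [0..<m]))"
  by (simp add: mlin_eval_def smat_def pl_def)

lemma pl_cong: "(\<And>x. x \<in> set xs \<Longrightarrow> A (\<sigma> x) = B (\<sigma> x)) \<Longrightarrow> pl A \<sigma> xs = pl B \<sigma> xs"
  by (induction xs) auto

lemma pl_conj:
  assumes "G ** H = mat 1" "H ** G = mat 1"
  shows "pl (\<lambda>k. G ** A k ** H) \<sigma> xs = G ** pl A \<sigma> xs ** H"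
proof (induction xs)
  case Nil then show ?case using assms by (simp add: matrix_mul_rid)
next
  case (Cons x xs)
  have "(G ** A (\<sigma> x) ** H) ** (G ** pl A \<sigma> xs ** H) = G ** A (\<sigma> x) ** (H ** G) ** pl A \<sigma> xs ** H"
    by (simp add: matrix_mul_assoc)
  also have "\<dots> = G ** (A (\<sigma> x) ** pl A \<sigma> xs) ** H"
    using assms by (simp add: matrix_mul_assoc matrix_mul_lid)
  finally show ?case using Cons by simp
qed

lemma pl_scale:
  "pl (\<lambda>k. smat (s k) (A k)) \<sigma> xs = smat (prod_list (map (s \<circ> \<sigma>) xs)) (pl A \<sigma> xs)"
  by (induction xs) (auto simp: smat_mult_left smat_mult_right mult.commute)

lemma pl_add:
  assumes "distinct xs" "inj_on \<sigma> (set xs)" "k \<in> \<sigma> ` set xs"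
  shows "pl (\<lambda>j. if j = k then U + V else A j) \<sigma> xs
       = pl (\<lambda>j. if j = k then U else A j) \<sigma> xs + pl (\<lambda>j. if j = k then V else A j) \<sigma> xs"
  using assms
proof (induction xs)
  case Nil then show ?case by simp
next
  case (Cons x xs)
  show ?case
  proof (cases "\<sigma> x = k")
    case True
    then have "k \<notin> \<sigma> ` set xs" using Cons.prems by auto
    then have e: "pl (\<lambda>j. if j = k then W else A j) \<sigma> xs = pl A \<sigma> xs" for W
      by (intro pl_cong) auto
    show ?thesis using True by (simp add: e mm_add_rdistrib)
  next
    case False
    then have "k \<in> \<sigma> ` set xs" using Cons.prems by auto
    with Cons have "pl (\<lambda>j. if j = k then U + V else A j) \<sigma> xs
       = pl (\<lambda>j. if j = k then U else A j) \<sigma> xs + pl (\<lambda>j. if j = k then V else A j) \<sigma> xs"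
      by auto
    then show ?thesis using False by (simp add: matrix_add_ldistrib)
  qed
qed


lemma mm_sum_left: "(sum f S) ** (H::'a::field^3^3) = (\<Sum>x\<in>S. f x ** H)"
  by (induction S rule: infinite_finite_induct) (auto simp: mm_add_rdistrib)

lemma mm_sum_right: "(G::'a::field^3^3) ** (sum f S) = (\<Sum>x\<in>S. G ** f x)"
  by (induction S rule: infinite_finite_induct) (auto simp: matrix_add_ldistrib)

lemma finite_perms: "finite {\<sigma>. \<sigma> permutes {..<m::nat}}"
  by (rule finite_permutations) simp

lemma mlin_cong:
  assumes "\<And>k. k < m \<Longrightarrow> A k = B k"
  shows "mlin_eval m c A = mlin_eval m c B"
  unfolding mlin_eval_alt
proof (rule sum.cong[OF refl])
  fix \<sigma> assume "\<sigma> \<in> {\<sigma>. \<sigma> permutes {..<m}}"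
  then have p: "\<sigma> permutes {..<m}" by simp
  have "pl A \<sigma> [0..<m] = pl B \<sigma> [0..<m]"
    by (rule pl_cong) (use assms permutes_in_image[OF p] in auto)
  then show "smat (c \<sigma>) (pl A \<sigma> [0..<m]) = smat (c \<sigma>) (pl B \<sigma> [0..<m])" by simp
qed

lemma mlin_conj:
  assumes "G ** H = mat 1" "H ** G = mat 1"
  shows "mlin_eval m c (\<lambda>k. G ** A k ** H) = G ** mlin_eval m c A ** H"
  unfolding mlin_eval_alt mm_sum_left mm_sum_right
  by (simp add: pl_conj[OF assms] smat_mult_left smat_mult_right)

lemma prod_perm:
  assumes "\<sigma> permutes {..<m}"
  shows "prod_list (map (s \<circ> \<sigma>) [0..<m]) = (\<Prod>k<m. s k)"
proof -
  have "prod_list (map (s \<circ> \<sigma>) [0..<m]) = prod (s \<circ> \<sigma>) {..<m}"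
    by (metis distinct_upt prod.distinct_set_conv_list set_upt lessThan_atLeast0)
  also have "\<dots> = prod s (\<sigma> ` {..<m})"
    by (rule prod.reindex[symmetric]) (rule permutes_inj_on[OF assms])
  also have "\<dots> = (\<Prod>k<m. s k)" using permutes_image[OF assms] by simp
  finally show ?thesis .
qed

lemma mlin_scale:
  "mlin_eval m c (\<lambda>k. smat (s k) (A k)) = smat (\<Prod>k<m. s k) (mlin_eval m c A)"
  unfolding mlin_eval_alt smat_sum
  by (intro sum.cong refl) (simp add: pl_scale prod_perm mult.commute)

lemma mlin_add:
  assumes "k < m"
  shows "mlin_eval m c (\<lambda>j. if j = k then U + V else A j)
       = mlin_eval m c (\<lambda>j. if j = k then U else A j) + mlin_eval m c (\<lambda>j. if j = k then V else A j)"
  unfolding mlin_eval_alt sum.distrib[symmetric] smat_add[symmetric]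
proof (intro sum.cong refl, goal_cases)
  case (1 \<sigma>)
  then have p: "\<sigma> permutes {..<m}" by simp
  have "k \<in> \<sigma> ` set [0..<m]" using permutes_image[OF p] assms by (simp add: lessThan_atLeast0)
  then show ?case
    by (subst pl_add) (auto intro: permutes_inj_on[OF p])
qed

lemma mlin_scale1:
  assumes "k < m"
  shows "mlin_eval m c (\<lambda>j. if j = k then smat t U else A j)
       = smat t (mlin_eval m c (\<lambda>j. if j = k then U else A j))"
proof -
  have "mlin_eval m c (\<lambda>j. if j = k then smat t U else A j)
      = mlin_eval m c (\<lambda>j. smat (if j = k then t else 1) (if j = k then U else A j))"
    by (rule mlin_cong) auto
  also have "\<dots> = smat (\<Prod>j<m. if j = k then t else 1) (mlin_eval m c (\<lambda>j. if j = k then U else A j))"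
    by (rule mlin_scale)
  also have "(\<Prod>j<m. if j = k then t else 1) = t"
    using assms by (simp add: prod.delta)
  finally show ?thesis .
qed

lemma mlin_zero1:
  assumes "k < m"
  shows "mlin_eval m c (\<lambda>j. if j = k then 0 else A j) = 0"
  using mlin_scale1[OF assms, of c 0 0 A] by (simp cong: if_cong)

lemma mlin_lincomb:
  assumes "k < m" "finite F"
  shows "mlin_eval m c (\<lambda>j. if j = k then (\<Sum>g\<in>F. smat (w g) (B g)) else A j)
       = (\<Sum>g\<in>F. smat (w g) (mlin_eval m c (\<lambda>j. if j = k then B g else A j)))"
  using assms(2)
proof (induction F rule: finite_induct)
  case empty then show ?case using mlin_zero1[OF assms(1), of c A] by (simp cong: if_cong)
next
  case (insert g F)
  have "mlin_eval m c (\<lambda>j. if j = k then (\<Sum>g\<in>insert g F. smat (w g) (B g)) else A j)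
      = mlin_eval m c (\<lambda>j. if j = k then smat (w g) (B g) + (\<Sum>g\<in>F. smat (w g) (B g)) else A j)"
    using insert by (simp cong: if_cong)
  also have "\<dots> = smat (w g) (mlin_eval m c (\<lambda>j. if j = k then B g else A j))
     + mlin_eval m c (\<lambda>j. if j = k then (\<Sum>g\<in>F. smat (w g) (B g)) else A j)"
    by (simp add: mlin_add[OF assms(1)] mlin_scale1[OF assms(1)])
  finally show ?case using insert by simp
qed

lemma mlin_m0:
  "mlin_eval 0 c A = mat (c id)"
proof -
  have "{\<sigma>. \<sigma> permutes {..<0::nat}} = {id}" by (auto simp: permutes_empty)
  then show ?thesis by (simp add: mlin_eval_alt smat_mat)
qed


lemma closed_sum:
  assumes "0 \<in> V" "\<And>x y. x \<in> V \<Longrightarrow> y \<in> V \<Longrightarrow> x + y \<in> V"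
  shows "finite S \<Longrightarrow> (\<And>x. x \<in> S \<Longrightarrow> f x \<in> V) \<Longrightarrow> sum f S \<in> V"
  by (induction S rule: finite_induct) (auto simp: assms)

lemma gen_in_span:
  fixes gen :: "'i::finite \<Rightarrow> 'a::field^3^3"
  shows "gen g = (\<Sum>g'\<in>UNIV. smat (if g' = g then 1 else 0) (gen g'))"
proof -
  have "(\<Sum>g'\<in>UNIV. smat (if g' = g then 1 else 0) (gen g')) = (\<Sum>g'\<in>UNIV. if g' = g then gen g' else 0)"
    by (intro sum.cong) auto
  also have "\<dots> = gen g" by simp
  finally show ?thesis by simp
qed

lemma mlin_span:
  fixes gen :: "nat \<Rightarrow> 'i::finite \<Rightarrow> 'a::field^3^3"
  assumes V0: "0 \<in> V" and Vadd: "\<And>x y. x \<in> V \<Longrightarrow> y \<in> V \<Longrightarrow> x + y \<in> V"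
    and Vsm: "\<And>a x. x \<in> V \<Longrightarrow> smat a x \<in> V"
    and span: "\<And>k. k < m \<Longrightarrow> \<exists>w. A k = (\<Sum>g\<in>UNIV. smat (w g) (gen k g))"
    and base: "\<And>f. mlin_eval m c (\<lambda>k. gen k (f k)) \<in> V"
  shows "mlin_eval m c A \<in> V"
proof -
  define Q where "Q n \<longleftrightarrow> (\<forall>B. (\<forall>k<m. \<exists>w. B k = (\<Sum>g\<in>UNIV. smat (w g) (gen k g)))
      \<longrightarrow> (\<forall>k<n. \<exists>i. B k = gen k i) \<longrightarrow> mlin_eval m c B \<in> V)" for n
  have "d \<le> m \<Longrightarrow> Q (m - d)" for d
  proof (induction d)
    case 0
    show ?case unfolding Q_def
    proof (intro allI impI)
      fix B :: "nat \<Rightarrow> 'a^3^3"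
      assume "\<forall>k<m - 0. \<exists>i. B k = gen k i"
      then obtain f where f: "\<And>k. k < m \<Longrightarrow> B k = gen k (f k)" by (metis diff_zero)
      have "mlin_eval m c B = mlin_eval m c (\<lambda>k. gen k (f k))"
        by (rule mlin_cong) (simp add: f)
      then show "mlin_eval m c B \<in> V" using base by simp
    qed
  next
    case (Suc d)
    define n where "n = m - Suc d"
    have nm: "n < m" and n1: "m - d = Suc n" using Suc.prems by (auto simp: n_def)
    have IH: "Q (Suc n)" using Suc n1 by auto
    show ?case unfolding n_def[symmetric] Q_def
    proof (intro allI impI)
      fix B :: "nat \<Rightarrow> 'a^3^3"
      assume sp: "\<forall>k<m. \<exists>w. B k = (\<Sum>g\<in>UNIV. smat (w g) (gen k g))"
        and gn: "\<forall>k<n. \<exists>i. B k = gen k i"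
      obtain w where w: "B n = (\<Sum>g\<in>UNIV. smat (w g) (gen n g))" using sp nm by auto
      have "mlin_eval m c B = mlin_eval m c (\<lambda>j. if j = n then (\<Sum>g\<in>UNIV. smat (w g) (gen n g)) else B j)"
        by (rule mlin_cong) (simp add: w)
      also have "\<dots> = (\<Sum>g\<in>UNIV. smat (w g) (mlin_eval m c (\<lambda>j. if j = n then gen n g else B j)))"
        by (rule mlin_lincomb[OF nm]) simp
      also have "\<dots> \<in> V"
      proof (rule closed_sum[OF V0 Vadd])
        show "finite (UNIV :: 'i set)" by simp
      next
        fix g
        have "mlin_eval m c (\<lambda>j. if j = n then gen n g else B j) \<in> V"
          using IH unfolding Q_def
        proof (elim allE impE)
          show "\<forall>k<m. \<exists>w. (if k = n then gen n g else B k) = (\<Sum>g\<in>UNIV. smat (w g) (gen k g))"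
            using sp gen_in_span[of "gen n" g] by auto
          show "\<forall>k<Suc n. \<exists>i. (if k = n then gen n g else B k) = gen k i"
            using gn by (auto simp: less_Suc_eq)
        qed
        then show "smat (w g) (mlin_eval m c (\<lambda>j. if j = n then gen n g else B j)) \<in> V"
          by (rule Vsm)
      qed
      finally show "mlin_eval m c B \<in> V" .
    qed
  qed
  from this[of m] have "Q 0" by simp
  then show ?thesis unfolding Q_def using span by auto
qed


definition unit3 :: "3 \<Rightarrow> 3 \<Rightarrow> 'a::field^3^3" where
  "unit3 i j = (\<chi> r s. if r = i \<and> s = j then 1 else 0)"

lemma unit3_nth[simp]: "unit3 i j $ r $ s = (if r = i \<and> s = j then 1 else 0)"
  by (simp add: unit3_def)

lemma unit_span: "(X::'a::field^3^3) = (\<Sum>p\<in>UNIV. smat (X $ fst p $ snd p) (unit3 (fst p) (snd p)))"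
proof -
  have "(\<Sum>p\<in>UNIV. smat (X $ fst p $ snd p) (unit3 (fst p) (snd p))) $ r $ s = X $ r $ s" for r s
  proof -
    have "(\<Sum>p\<in>UNIV. smat (X $ fst p $ snd p) (unit3 (fst p) (snd p))) $ r $ s
        = (\<Sum>p\<in>UNIV. if p = (r, s) then X $ r $ s else 0)"
      unfolding sum_component smat_nth unit3_nth by (intro sum.cong) auto
    also have "\<dots> = X $ r $ s" by simp
    finally show ?thesis .
  qed
  then show ?thesis by (simp add: vec_eq_iff)
qed

definition is_diag :: "'a::field^3^3 \<Rightarrow> bool" where
  "is_diag D \<longleftrightarrow> (\<forall>i j. i \<noteq> j \<longrightarrow> D $ i $ j = 0)"

lemma diag_conj_scalar:
  fixes D :: "'a::field^3^3"
  assumes "is_diag D"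
    and "is_diag ((mat 1 + unit3 1 2) ** D ** (mat 1 - unit3 1 2))"
    and "is_diag ((mat 1 + unit3 2 3) ** D ** (mat 1 - unit3 2 3))"
  shows "D = mat (D $ 1 $ 1)"
proof -
  have z: "D$1$2 = 0" "D$1$3 = 0" "D$2$1 = 0" "D$2$3 = 0" "D$3$1 = 0" "D$3$2 = 0"
    using assms(1) unfolding is_diag_def by auto
  have "((mat 1 + unit3 1 2) ** D ** (mat 1 - unit3 1 2)) $ 1 $ 2 = 0"
    using assms(2) unfolding is_diag_def by auto
  then have a: "D$2$2 = D$1$1"
    by (simp add: matrix_matrix_mult_def sum_3 mat_def z)
  have "((mat 1 + unit3 2 3) ** D ** (mat 1 - unit3 2 3)) $ 2 $ 3 = 0"
    using assms(3) unfolding is_diag_def by auto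
  then have b: "D$3$3 = D$2$2"
    by (simp add: matrix_matrix_mult_def sum_3 mat_def z)
  show ?thesis
    unfolding vec_eq_iff forall_3 using a b z by (simp add: mat_def)
qed

lemma unipotent_inv:
  fixes i j :: 3
  assumes "i \<noteq> j"
  shows "(mat 1 + unit3 i j) ** (mat 1 - unit3 i j) = (mat 1 :: 'a::field^3^3)"
    "(mat 1 - unit3 i j) ** (mat 1 + unit3 i j) = (mat 1 :: 'a::field^3^3)"
  using assms by (simp_all add: vec_eq_iff matrix_matrix_mult_def sum_3 mat_def forall_3 algebra_simps)
     (metis exhaust_3)+

lemma exists_unit_nondiag:
  fixes c :: "(nat \<Rightarrow> nat) \<Rightarrow> 'a::field"
  assumes "\<not> is_PI m c" "\<not> is_central m c"
  shows "\<exists>f :: nat \<Rightarrow> 3 \<times> 3. \<not> is_diag (mlin_eval m c (\<lambda>k. unit3 (fst (f k)) (snd (f k))))"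
proof (rule ccontr)
  assume "\<not> ?thesis"
  then have base: "\<And>f :: nat \<Rightarrow> 3 \<times> 3. is_diag (mlin_eval m c (\<lambda>k. unit3 (fst (f k)) (snd (f k))))"
    by blast
  have alld: "is_diag (mlin_eval m c A)" for A
  proof -
    have "mlin_eval m c A \<in> {D. is_diag D}"
    proof (rule mlin_span[where gen = "\<lambda>k p. unit3 (fst p) (snd p)"])
      show "0 \<in> {D::'a^3^3. is_diag D}" by (simp add: is_diag_def)
      show "x + y \<in> {D. is_diag D}" if "x \<in> {D. is_diag D}" "y \<in> {D. is_diag D}" for x y :: "'a^3^3"
        using that by (simp add: is_diag_def)
      show "smat a x \<in> {D. is_diag D}" if "x \<in> {D. is_diag D}" for a x
        using that by (simp add: is_diag_def)
      show "\<exists>w. A k = (\<Sum>g\<in>UNIV. smat (w g) (unit3 (fst g) (snd g)))" for k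
        by (rule exI[of _ "\<lambda>p. A k $ fst p $ snd p"]) (rule unit_span)
      show "mlin_eval m c (\<lambda>k. unit3 (fst (f k)) (snd (f k))) \<in> {D. is_diag D}" for f :: "nat \<Rightarrow> 3 \<times> 3"
        using base by simp
    qed
    then show ?thesis by simp
  qed
  have "\<exists>s. mlin_eval m c A = mat s" for A
  proof -
    let ?D = "mlin_eval m c A"
    have "is_diag ((mat 1 + unit3 i j) ** ?D ** (mat 1 - unit3 i j))" if "i \<noteq> j" for i j :: 3
      using alld[of "\<lambda>k. (mat 1 + unit3 i j) ** A k ** (mat 1 - unit3 i j)"]
      by (simp add: mlin_conj unipotent_inv[OF that])
    then show ?thesis using diag_conj_scalar[OF alld[of A]] by fastforce
  qed
  then show False using assms unfolding is_central_def by auto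
qed


section \<open>Cube roots of unity indexed by Z/3\<close>

definition om :: "'a::field \<Rightarrow> 3 \<Rightarrow> 'a" where
  "om e x = (if x = 1 then e else if x = 2 then e^2 else 1)"

lemma om_simps[simp]: "om e 1 = e" "om e 2 = e^2" "om e 3 = 1" "om e 0 = 1"
  by (simp_all add: om_def)

lemma om_add:
  assumes "e^3 = 1"
  shows "om e (x + y) = om e x * om e y"
proof -
  have e4: "e^4 = e" using assms by (metis power_add power_one_right mult_1 numeral_plus_one semiring_norm(2) semiring_norm(8) numeral_Bit0 numeral_One one_add_one mult.commute)
  have "e * e^2 = 1" "e^2 * e = 1" "e^2*e^2 = e" using assms e4
    by (simp_all add: power2_eq_square power3_eq_cube power4_eq_xxxx mult.assoc)
  then show ?thesis using exhaust_3[of x] exhaust_3[of y]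
    by (auto simp: om_def power2_eq_square)
qed

lemma om_nz: "e^3 = 1 \<Longrightarrow> om e x \<noteq> 0"
  by (auto simp: om_def)

lemma eps_facts:
  fixes e :: "'a::field"
  assumes "e^3 = 1" "e \<noteq> 1"
  shows "1 + e + e^2 = 0" "e \<noteq> 0" "e^2 \<noteq> 1" "e^2 \<noteq> e"
proof -
  have "(e - 1) * (1 + e + e^2) = e^3 - 1" by (simp add: algebra_simps power2_eq_square power3_eq_cube)
  then show 1: "1 + e + e^2 = 0" using assms by simp
  show "e \<noteq> 0" using assms by auto
  show "e^2 \<noteq> 1"
  proof
    assume "e^2 = 1"
    then have "e^3 = e" by (simp add: power3_eq_cube power2_eq_square mult.assoc)
    then show False using assms by simp
  qed
  show "e^2 \<noteq> e"
  proof
    assume "e^2 = e"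
    then have "e * (e - 1) = 0" by (simp add: algebra_simps power2_eq_square)
    then show False using assms by auto
  qed
qed

lemma om_inj:
  assumes "e^3 = 1" "e \<noteq> 1" "om e x = om e y"
  shows "x = y"
  using eps_facts[OF assms(1,2)] assms(3) exhaust_3[of x] exhaust_3[of y]
  by (auto simp: om_def)

lemma om_sum:
  assumes "e^3 = 1"
  shows "(\<Prod>k\<in>S. om e (f k)) = om e (\<Sum>k\<in>S. f k)"
  by (induction S rule: infinite_finite_induct) (auto simp: om_add[OF assms])

lemma om_diff:
  assumes "e^3 = 1"
  shows "om e x / om e y = om e (x - y)"
proof -
  have "om e x = om e (x - y) * om e y" using om_add[OF assms, of "x - y" y] by simp
  then show ?thesis using om_nz[OF assms, of y] by simp
qed

section \<open>Diagonal matrices and the torus action\<close>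

definition diag3 :: "(3 \<Rightarrow> 'a::field) \<Rightarrow> 'a^3^3" where
  "diag3 t = (\<chi> r s. if r = s then t r else 0)"

lemma diag3_nth[simp]: "diag3 t $ r $ s = (if r = s then t r else 0)"
  by (simp add: diag3_def)

lemma diag3_mult_left[simp]: "(diag3 t ** X) $ r $ s = t r * X $ r $ s"
proof -
  have "(diag3 t ** X) $ r $ s = (\<Sum>k\<in>UNIV. (if r = k then t r else 0) * X $ k $ s)"
    unfolding matrix_matrix_mult_def by simp
  also have "\<dots> = (\<Sum>k\<in>UNIV. if k = r then t r * X $ r $ s else 0)"
    by (intro sum.cong) auto
  finally show ?thesis by simp
qed

lemma diag3_mult_right[simp]: "(X ** diag3 t) $ r $ s = X $ r $ s * t s"
proof -
  have "(X ** diag3 t) $ r $ s = (\<Sum>k\<in>UNIV. X $ r $ k * (if k = s then t k else 0))"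
    unfolding matrix_matrix_mult_def by simp
  also have "\<dots> = (\<Sum>k\<in>UNIV. if k = s then X $ r $ s * t s else 0)"
    by (intro sum.cong) auto
  finally show ?thesis by simp
qed

lemma diag3_inv:
  assumes "\<And>x. t x \<noteq> 0"
  shows "diag3 t ** diag3 (\<lambda>x. 1 / t x) = mat 1" "diag3 (\<lambda>x. 1 / t x) ** diag3 t = mat 1"
  using assms by (auto simp: vec_eq_iff mat_def)

lemma torus_unit:
  "diag3 t ** unit3 a b ** diag3 (\<lambda>x. 1 / t x) = smat (t a / t b) (unit3 a b)"
  by (auto simp: vec_eq_iff)

lemma torus:
  fixes c :: "(nat \<Rightarrow> nat) \<Rightarrow> 'a::field" and t :: "3 \<Rightarrow> 'a"
  assumes "\<And>x. t x \<noteq> 0" "mlin_eval m c (\<lambda>k. unit3 (a k) (b k)) $ r $ s \<noteq> 0"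
  shows "t r / t s = (\<Prod>k<m. t (a k) / t (b k))"
proof -
  let ?P = "mlin_eval m c (\<lambda>k. unit3 (a k) (b k))"
  have "diag3 t ** ?P ** diag3 (\<lambda>x. 1 / t x)
      = mlin_eval m c (\<lambda>k. diag3 t ** unit3 (a k) (b k) ** diag3 (\<lambda>x. 1 / t x))"
    by (rule mlin_conj[symmetric]) (use diag3_inv[OF assms(1)] in auto)
  also have "\<dots> = smat (\<Prod>k<m. t (a k) / t (b k)) ?P"
    by (simp add: torus_unit mlin_scale)
  finally have "(diag3 t ** ?P ** diag3 (\<lambda>x. 1 / t x)) $ r $ s = (\<Prod>k<m. t (a k) / t (b k)) * ?P $ r $ s"
    by simp
  then have "t r * ?P $ r $ s / t s = (\<Prod>k<m. t (a k) / t (b k)) * ?P $ r $ s" by simp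
  then show ?thesis using assms(2) assms(1)[of s] by (simp add: field_simps)
qed


lemma unit_edge:
  fixes c :: "(nat \<Rightarrow> nat) \<Rightarrow> 'a::field" and e :: 'a
  assumes e: "e^3 = 1" "e \<noteq> 1"
    and nz: "mlin_eval m c (\<lambda>k. unit3 (a k) (b k)) $ r $ s \<noteq> 0"
  shows "r - s = (\<Sum>k<m. a k - b k)"
proof -
  have "om e r / om e s = (\<Prod>k<m. om e (a k) / om e (b k))"
    by (rule torus[OF om_nz[OF e(1)] nz])
  then have "om e (r - s) = om e (\<Sum>k<m. a k - b k)"
    by (simp add: om_diff[OF e(1)] om_sum[OF e(1)])
  then show ?thesis using om_inj[OF e] by blast
qed

lemma unit_single:
  fixes c :: "(nat \<Rightarrow> nat) \<Rightarrow> 'a::field" and e :: 'a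
  assumes e: "e^3 = 1" "e \<noteq> 1"
    and nz: "mlin_eval m c (\<lambda>k. unit3 (a k) (b k)) $ r $ s \<noteq> 0"
    and nz': "mlin_eval m c (\<lambda>k. unit3 (a k) (b k)) $ r' $ s' \<noteq> 0"
    and rs: "r \<noteq> s"
  shows "r' = r \<and> s' = s"
proof -
  define tt where "tt l x = (if x = l then e else 1)" for l x :: 3
  have ef: "e \<noteq> 0" "e^2 \<noteq> 1" using eps_facts[OF e] by auto
  have tnz: "tt l x \<noteq> 0" for l x using ef by (simp add: tt_def)
  have eq: "tt l r / tt l s = tt l r' / tt l s'" for l
    using torus[of "tt l", OF tnz nz] torus[of "tt l", OF tnz nz'] by simp
  have ee: "e * e \<noteq> 1" using ef by (simp add: power2_eq_square)
  have 1: "r' = r"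
  proof (rule ccontr)
    assume "r' \<noteq> r"
    then show False using eq[of r] rs ef ee
      by (cases "s' = r") (auto simp: tt_def field_simps)
  qed
  have 2: "s' = s"
  proof (rule ccontr)
    assume "s' \<noteq> s"
    then show False using eq[of s] rs ef ee 1
      by (cases "s' = r") (auto simp: tt_def field_simps)
  qed
  show ?thesis using 1 2 by simp
qed

lemma unit_single_mat:
  fixes c :: "(nat \<Rightarrow> nat) \<Rightarrow> 'a::field" and e :: 'a
  assumes e: "e^3 = 1" "e \<noteq> 1"
    and nz: "mlin_eval m c (\<lambda>k. unit3 (a k) (b k)) $ r $ s \<noteq> 0"
    and rs: "r \<noteq> s"
  shows "mlin_eval m c (\<lambda>k. unit3 (a k) (b k)) = smat (mlin_eval m c (\<lambda>k. unit3 (a k) (b k)) $ r $ s) (unit3 r s)"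
  using unit_single[OF e nz _ rs] by (auto simp: vec_eq_iff)


definition Ymat :: "'a::field^3^3" where "Ymat = (\<chi> r s. if r = s + 1 then 1 else 0)"
definition Yinv :: "'a::field^3^3" where "Yinv = (\<chi> r s. if s = r + 1 then 1 else 0)"

lemma Ymat_left[simp]: "(Ymat ** X) $ r $ s = X $ (r - 1) $ s"
proof -
  have "(Ymat ** X) $ r $ s = (\<Sum>k\<in>UNIV. (if r = k + 1 then 1 else 0) * X $ k $ s)"
    unfolding matrix_matrix_mult_def Ymat_def by simp
  also have "\<dots> = (\<Sum>k\<in>UNIV. if k = r - 1 then X $ (r - 1) $ s else 0)"
    by (intro sum.cong) (auto simp: algebra_simps)
  finally show ?thesis by simp
qed

lemma Yinv_right[simp]: "(X ** Yinv) $ r $ s = X $ r $ (s - 1)"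
proof -
  have "(X ** Yinv) $ r $ s = (\<Sum>k\<in>UNIV. X $ r $ k * (if s = k + 1 then 1 else 0))"
    unfolding matrix_matrix_mult_def Yinv_def by simp
  also have "\<dots> = (\<Sum>k\<in>UNIV. if k = s - 1 then X $ r $ (s - 1) else 0)"
    by (intro sum.cong) (auto simp: algebra_simps)
  finally show ?thesis by simp
qed

lemma Y_inv: "Ymat ** Yinv = (mat 1 :: 'a::field^3^3)" "Yinv ** Ymat = (mat 1 :: 'a::field^3^3)"
  by (auto simp: vec_eq_iff Yinv_def Ymat_def mat_def matrix_matrix_mult_def sum_3 forall_3)

lemma Y_unit: "Ymat ** unit3 a b ** Yinv = (unit3 (a + 1) (b + 1) :: 'a::field^3^3)"
  by (auto simp: vec_eq_iff algebra_simps)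

lemma Y_conj_nth: "(Ymat ** X ** Yinv) $ r $ s = X $ (r - 1) $ (s - 1)"
  by simp

lemma unit_mult: "unit3 a b ** unit3 c d = (if b = c then unit3 a d else (0::'a::field^3^3))"
proof -
  have "(unit3 a b ** unit3 c d) $ r $ s = (if b = c then unit3 a d else (0::'a^3^3)) $ r $ s" for r s
  proof -
    have "(unit3 a b ** unit3 c d :: 'a^3^3) $ r $ s = (\<Sum>k\<in>UNIV. (if r = a \<and> k = b then 1 else 0) * (if k = c \<and> s = d then 1 else 0))"
      unfolding matrix_matrix_mult_def by simp
    also have "\<dots> = (\<Sum>k\<in>UNIV. if k = b then (if r = a \<and> b = c \<and> s = d then 1 else 0) else 0)"
      by (intro sum.cong) auto
    finally show ?thesis by simp
  qed
  then show ?thesis by (simp add: vec_eq_iff)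
qed

lemma two_edge:
  fixes \<kappa> \<kappa>' :: "'a::field" and B s s' :: 3
  assumes "B \<noteq> 0" "\<kappa> \<noteq> 0" "\<kappa>' \<noteq> 0" "s \<noteq> s'"
  defines "N \<equiv> smat \<kappa> (unit3 (s + B) s) + smat \<kappa>' (unit3 (s' + B) s')"
  shows "N ** N ** N = 0 \<and> N ** N \<noteq> 0"
proof -
  have B: "B = 1 \<or> B = 2" using assms(1) exhaust_3[of B] by auto
  show ?thesis
    using B exhaust_3[of s] exhaust_3[of s'] assms(2-4) unfolding N_def
    apply (elim disjE)
    apply (simp_all add: vec_eq_iff forall_3 matrix_matrix_mult_def sum_3)
    done
qed


lemma mlin_subsets:
  fixes c :: "(nat \<Rightarrow> nat) \<Rightarrow> 'a::field"
  assumes "finite D" "D \<subseteq> {..<m}"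
  shows "mlin_eval m c (\<lambda>k. if k \<in> D then U k + V k else U k)
       = (\<Sum>T\<in>Pow D. mlin_eval m c (\<lambda>k. if k \<in> T then V k else U k))"
  using assms
proof (induction D arbitrary: U rule: finite_induct)
  case empty then show ?case by simp
next
  case (insert x D)
  have xm: "x < m" using insert.prems by auto
  have Dm: "D \<subseteq> {..<m}" using insert.prems by auto
  define W where "W k = (if k \<in> D then U k + V k else U k)" for k
  have "mlin_eval m c (\<lambda>k. if k \<in> insert x D then U k + V k else U k)
      = mlin_eval m c (\<lambda>k. if k = x then U x + V x else W k)"
    by (rule mlin_cong) (auto simp: W_def)
  also have "\<dots> = mlin_eval m c (\<lambda>k. if k = x then U x else W k) + mlin_eval m c (\<lambda>k. if k = x then V x else W k)"
    by (rule mlin_add[OF xm])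
  also have "mlin_eval m c (\<lambda>k. if k = x then U x else W k) = mlin_eval m c (\<lambda>k. if k \<in> D then U k + V k else U k)"
    by (rule mlin_cong) (use insert.hyps in \<open>auto simp: W_def\<close>)
  also have "\<dots> = (\<Sum>T\<in>Pow D. mlin_eval m c (\<lambda>k. if k \<in> T then V k else U k))"
    by (rule insert.IH[OF Dm])
  also have "mlin_eval m c (\<lambda>k. if k = x then V x else W k)
      = mlin_eval m c (\<lambda>k. if k \<in> D then (\<lambda>k. if k = x then V x else U k) k + V k else (\<lambda>k. if k = x then V x else U k) k)"
    by (rule mlin_cong) (use insert.hyps in \<open>auto simp: W_def\<close>)
  also have "\<dots> = (\<Sum>T\<in>Pow D. mlin_eval m c (\<lambda>k. if k \<in> T then V k else (if k = x then V x else U k)))"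
    by (rule insert.IH[OF Dm])
  also have "\<dots> = (\<Sum>T\<in>Pow D. mlin_eval m c (\<lambda>k. if k \<in> insert x T then V k else U k))"
    by (intro sum.cong refl mlin_cong) auto
  also have "\<dots> = (\<Sum>T\<in>insert x ` Pow D. mlin_eval m c (\<lambda>k. if k \<in> T then V k else U k))"
  proof (rule sum.reindex_cong[symmetric])
    show "inj_on (insert x) (Pow D)" using insert.hyps by (auto simp: inj_on_def)
  qed auto
  finally have "mlin_eval m c (\<lambda>k. if k \<in> insert x D then U k + V k else U k)
     = (\<Sum>T\<in>Pow D. mlin_eval m c (\<lambda>k. if k \<in> T then V k else U k))
     + (\<Sum>T\<in>insert x ` Pow D. mlin_eval m c (\<lambda>k. if k \<in> T then V k else U k))" .
  also have "\<dots> = (\<Sum>T\<in>Pow D \<union> insert x ` Pow D. mlin_eval m c (\<lambda>k. if k \<in> T then V k else U k))"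
    by (rule sum.union_disjoint[symmetric]) (use insert.hyps in auto)
  also have "Pow D \<union> insert x ` Pow D = Pow (insert x D)" by (rule Pow_insert[symmetric])
  finally show ?case .
qed


section \<open>A rank-two nilpotent value\<close>

lemma exists_two_edge:
  fixes c :: "(nat \<Rightarrow> nat) \<Rightarrow> 'a::field" and e :: 'a
  assumes e: "e^3 = 1" "e \<noteq> 1"
    and nz: "mlin_eval m c (\<lambda>k. unit3 (a k) (s0 k)) $ r $ s \<noteq> 0" and rs: "r \<noteq> s"
  shows "\<exists>A. mlin_eval m c A ** mlin_eval m c A ** mlin_eval m c A = 0 \<and> mlin_eval m c A ** mlin_eval m c A \<noteq> 0"
proof -
  define b where "b k = a k - s0 k" for k
  define B where "B = (\<Sum>k<m. b k)"
  define Ov where "Ov i = mlin_eval m c (\<lambda>k. unit3 (i k + b k) (i k))" for i :: "nat \<Rightarrow> 3"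
  have O_edge: "x - y = B" if "Ov i $ x $ y \<noteq> 0" for i x y
    using unit_edge[OF e that[unfolded Ov_def]] by (simp add: B_def)
  have O_single: "x' = x \<and> y' = y" if "Ov i $ x $ y \<noteq> 0" "Ov i $ x' $ y' \<noteq> 0" "x \<noteq> y" for i x y x' y'
    using unit_single[OF e that(1)[unfolded Ov_def] that(2)[unfolded Ov_def] that(3)] .
  define i0 where "i0 = s0"
  have ai: "(\<lambda>k. unit3 (a k) (s0 k)) = (\<lambda>k. unit3 (i0 k + b k) (i0 k))"
    by (simp add: i0_def b_def)
  have O0: "Ov i0 $ r $ s \<noteq> 0" using nz by (simp add: ai Ov_def)
  have Bnz: "B \<noteq> 0" using O_edge[OF O0] rs by auto
  have offd: "x \<noteq> y" if "Ov i $ x $ y \<noteq> 0" for i x y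
    using O_edge[OF that] Bnz by auto
  define good where "good i i' \<longleftrightarrow> Ov i \<noteq> 0 \<and> Ov i' \<noteq> 0 \<and> (\<forall>x y. Ov i $ x $ y = 0 \<or> Ov i' $ x $ y = 0)" for i i'
  define dist where "dist i i' = card {k \<in> {..<m}. i k \<noteq> (i' k :: 3)}" for i i'
  define i1 where "i1 k = i0 k + 1" for k
  have O1: "Ov i1 = Ymat ** Ov i0 ** Yinv"
    unfolding Ov_def
    by (subst mlin_conj[OF Y_inv, symmetric]) (simp add: Y_unit i1_def algebra_simps)
  have O1nz: "Ov i1 $ (r + 1) $ (s + 1) \<noteq> 0" using O0 by (simp add: O1)
  have "good i0 i1"
    unfolding good_def
  proof (intro conjI allI)
    show "Ov i0 \<noteq> 0" using O0 by auto
    show "Ov i1 \<noteq> 0" using O1nz by auto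
    fix x y
    show "Ov i0 $ x $ y = 0 \<or> Ov i1 $ x $ y = 0"
    proof (rule ccontr)
      assume "\<not> ?thesis"
      then have h: "Ov i0 $ x $ y \<noteq> 0" "Ov i1 $ x $ y \<noteq> 0" by auto
      have "x = r" "y = s" using O_single[OF O0 h(1) rs] by auto
      then have "Ov i0 $ (r - 1) $ (s - 1) \<noteq> 0" using h(2) by (simp add: O1)
      then have "r - 1 = r" using O_single[OF O0 _ rs] by blast
      then show False by simp
    qed
  qed
  then have "\<exists>n. \<exists>i i'. good i i' \<and> dist i i' = n" by blast
  then obtain n where "\<exists>i i'. good i i' \<and> dist i i' = n" and nmin: "\<And>n'. n' < n \<Longrightarrow> \<not> (\<exists>i i'. good i i' \<and> dist i i' = n')"
    using exists_least_iff[of "\<lambda>n. \<exists>i i'. good i i' \<and> dist i i' = n"] by blast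
  then obtain i i' where g: "good i i'" and dn: "dist i i' = n" by blast
  obtain x y where xy: "Ov i $ x $ y \<noteq> 0" using g unfolding good_def by (auto simp: vec_eq_iff)
  obtain x' y' where xy': "Ov i' $ x' $ y' \<noteq> 0" using g unfolding good_def by (auto simp: vec_eq_iff)
  have dif: "\<not> (x' = x \<and> y' = y)" using g xy xy' unfolding good_def by auto
  define D where "D = {k \<in> {..<m}. i k \<noteq> i' k}"
  have Dfin: "finite D" and Dm: "D \<subseteq> {..<m}" by (auto simp: D_def)
  have cardD: "card D = n" using dn by (simp add: dist_def D_def)
  define mix where "mix T k = (if k \<in> T then i' k else i k)" for T k
  have mix0: "Ov (mix T) = 0" if T: "T \<subseteq> D" "T \<noteq> {}" "T \<noteq> D" for T
  proof (rule ccontr)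
    assume "Ov (mix T) \<noteq> 0"
    then obtain u v where uv: "Ov (mix T) $ u $ v \<noteq> 0" by (auto simp: vec_eq_iff)
    have cT: "card T < n" using T Dfin cardD by (metis psubset_card_mono psubsetI)
    have cDT: "card (D - T) < n" using T Dfin cardD by (metis Diff_subset card_Diff_subset card_gt_0_iff diff_less finite_subset subset_empty)
    have d1: "dist i (mix T) = card T"
      unfolding dist_def mix_def using T by (intro arg_cong[where f = card]) (auto simp: D_def)
    have d2: "dist (mix T) i' = card (D - T)"
      unfolding dist_def mix_def using T by (intro arg_cong[where f = card]) (auto simp: D_def)
    show False
    proof (cases "u = x \<and> v = y")
      case False
      have "good i (mix T)" unfolding good_def
      proof (intro conjI allI)
        show "Ov i \<noteq> 0" "Ov (mix T) \<noteq> 0" using g uv unfolding good_def by auto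
        fix p q
        show "Ov i $ p $ q = 0 \<or> Ov (mix T) $ p $ q = 0"
          using O_single[OF xy _ offd[OF xy], of p q] O_single[OF uv _ offd[OF uv], of p q] False by auto
      qed
      then show False using nmin[OF cT] d1 by blast
    next
      case True
      then have False': "\<not> (u = x' \<and> v = y')" using dif by auto
      have "good (mix T) i'" unfolding good_def
      proof (intro conjI allI)
        show "Ov i' \<noteq> 0" "Ov (mix T) \<noteq> 0" using g uv unfolding good_def by auto
        fix p q
        show "Ov (mix T) $ p $ q = 0 \<or> Ov i' $ p $ q = 0"
          using O_single[OF xy' _ offd[OF xy'], of p q] O_single[OF uv _ offd[OF uv], of p q] False' by auto
      qed
      then show False using nmin[OF cDT] d2 by blast
    qed
  qed
  have Dne: "D \<noteq> {}"
  proof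
    assume "D = {}"
    then have "Ov i = Ov i'" unfolding Ov_def by (intro mlin_cong) (auto simp: D_def)
    then show False using g xy unfolding good_def by auto
  qed
  define E where "E i k = (unit3 (i k + b k) (i k) :: 'a^3^3)" for i k
  define A where "A k = (if k \<in> D then E i k + E i' k else E i k)" for k
  have "mlin_eval m c A = (\<Sum>T\<in>Pow D. mlin_eval m c (\<lambda>k. if k \<in> T then E i' k else E i k))"
    unfolding A_def by (rule mlin_subsets[OF Dfin Dm])
  also have "\<dots> = (\<Sum>T\<in>Pow D. Ov (mix T))"
    unfolding Ov_def E_def mix_def by (intro sum.cong refl arg_cong[where f = "mlin_eval m c"]) auto
  also have "\<dots> = (\<Sum>T\<in>{{}, D}. Ov (mix T))"
    by (rule sum.mono_neutral_right) (use mix0 Dfin in auto)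
  also have "\<dots> = Ov i + Ov i'"
  proof -
    have "mix {} = i" by (simp add: mix_def fun_eq_iff)
    moreover have "Ov (mix D) = Ov i'" unfolding Ov_def mix_def by (intro mlin_cong) (auto simp: D_def)
    ultimately show ?thesis using Dne by simp
  qed
  finally have NA: "mlin_eval m c A = Ov i + Ov i'" .
  have Oi: "Ov i = smat (Ov i $ x $ y) (unit3 (y + B) y)"
  proof -
    have "Ov i = smat (Ov i $ x $ y) (unit3 x y)"
      using O_single[OF xy _ offd[OF xy]] by (auto simp: vec_eq_iff)
    moreover have "x = y + B" using O_edge[OF xy] by (simp add: algebra_simps)
    ultimately show ?thesis by simp
  qed
  have Oi': "Ov i' = smat (Ov i' $ x' $ y') (unit3 (y' + B) y')"
  proof -
    have "Ov i' = smat (Ov i' $ x' $ y') (unit3 x' y')"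
      using O_single[OF xy' _ offd[OF xy']] by (auto simp: vec_eq_iff)
    moreover have "x' = y' + B" using O_edge[OF xy'] by (simp add: algebra_simps)
    ultimately show ?thesis by simp
  qed
  have "y \<noteq> y'" using dif O_edge[OF xy] O_edge[OF xy'] by (auto simp: algebra_simps)
  then have "(Ov i + Ov i') ** (Ov i + Ov i') ** (Ov i + Ov i') = 0 \<and> (Ov i + Ov i') ** (Ov i + Ov i') \<noteq> 0"
    using two_edge[OF Bnz xy xy', of y y'] Oi Oi' by simp
  then show ?thesis using NA by metis
qed


definition tr3 :: "'a::field^3^3 \<Rightarrow> 'a" where
  "tr3 N = N$1$1 + N$2$2 + N$3$3"

definition c23 :: "'a::field^3^3 \<Rightarrow> 'a" where
  "c23 N = N$1$1*N$2$2 - N$1$2*N$2$1 + N$1$1*N$3$3 - N$1$3*N$3$1 + N$2$2*N$3$3 - N$2$3*N$3$2"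

lemma charpoly_eval:
  "poly (charpoly3 N) x = x^3 - tr3 N * x^2 + c23 N * x - det N"
  unfolding charpoly3_def det_3 tr3_def c23_def
  by (simp add: algebra_simps power2_eq_square power3_eq_cube)

lemma cayley_hamilton:
  fixes N :: "'a::field^3^3"
  shows "N ** N ** N = smat (tr3 N) (N ** N) - smat (c23 N) N + mat (det N)"
  unfolding vec_eq_iff forall_3 tr3_def c23_def det_3
  by (simp add: matrix_matrix_mult_def sum_3 mat_def algebra_simps)


lemma mv_smult: "N *v (a *s v) = a *s (N *v (v::'a::field^3))"
  by (simp add: vec_eq_iff matrix_vector_mult_def sum_distrib_left algebra_simps)

lemma inj_imp_inv:
  fixes P :: "'a::field^3^3"
  assumes "\<And>x. P *v x = 0 \<Longrightarrow> x = 0"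
  shows "\<exists>Q. P ** Q = mat 1 \<and> Q ** P = mat 1"
proof -
  have "inj ((*v) P)"
  proof (rule injI)
    fix x y assume "P *v x = P *v y"
    then have "P *v (x - y) = 0" by (simp add: matrix_vector_mult_diff_distrib)
    from assms[OF this] show "x = y" by simp
  qed
  then have "det P \<noteq> 0"
    using det_nz_iff_inj_gen[of "(*v) P"] by simp
  then have "invertible P" by (simp add: invertible_det_nz)
  then show ?thesis unfolding invertible_def by blast
qed

lemma sim_cols:
  fixes N T :: "'a::field^3^3" and v1 v2 v3 :: "'a^3"
  assumes indep: "\<And>a1 a2 a3. a1 *s v1 + a2 *s v2 + a3 *s v3 = 0 \<Longrightarrow> a1 = 0 \<and> a2 = 0 \<and> a3 = 0"
    and c1: "N *v v1 = T$1$1 *s v1 + T$2$1 *s v2 + T$3$1 *s v3"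
    and c2: "N *v v2 = T$1$2 *s v1 + T$2$2 *s v2 + T$3$2 *s v3"
    and c3: "N *v v3 = T$1$3 *s v1 + T$2$3 *s v2 + T$3$3 *s v3"
  shows "\<exists>P Q. P ** Q = mat 1 \<and> Q ** P = mat 1 \<and> N = P ** T ** Q"
proof -
  define P :: "'a^3^3" where "P = (\<chi> i j. if j = 1 then v1$i else if j = 2 then v2$i else v3$i)"
  have Pv: "P *v x = x$1 *s v1 + x$2 *s v2 + x$3 *s v3" for x
    by (simp add: P_def vec_eq_iff matrix_vector_mult_def sum_3 algebra_simps)
  have inj0: "x = 0" if "P *v x = 0" for x
    using indep[of "x$1" "x$2" "x$3"] that unfolding Pv by (simp add: vec_eq_iff forall_3)
  obtain Q where Q: "P ** Q = mat 1" "Q ** P = mat 1" using inj_imp_inv[OF inj0] by blast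
  have e1: "(N *v v1) $ r = v1$r * T$1$1 + v2$r * T$2$1 + v3$r * T$3$1" for r
    using arg_cong[OF c1, of "\<lambda>x. x $ r"] by (simp add: algebra_simps)
  have e2: "(N *v v2) $ r = v1$r * T$1$2 + v2$r * T$2$2 + v3$r * T$3$2" for r
    using arg_cong[OF c2, of "\<lambda>x. x $ r"] by (simp add: algebra_simps)
  have e3: "(N *v v3) $ r = v1$r * T$1$3 + v2$r * T$2$3 + v3$r * T$3$3" for r
    using arg_cong[OF c3, of "\<lambda>x. x $ r"] by (simp add: algebra_simps)
  have L: "(N ** P) $ r $ j = (N *v (if j = 1 then v1 else if j = 2 then v2 else v3)) $ r" for r j
    by (simp add: P_def matrix_matrix_mult_def matrix_vector_mult_def sum_3)
  have R: "(P ** T) $ r $ j = v1$r * T$1$j + v2$r * T$2$j + v3$r * T$3$j" for r j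
    by (simp add: P_def matrix_matrix_mult_def sum_3)
  have "(N ** P) $ r $ j = (P ** T) $ r $ j" for r j
  proof -
    have "j = 1 \<or> j = 2 \<or> j = 3" by (rule exhaust_3)
    moreover have "(N ** P) $ r $ 1 = (P ** T) $ r $ 1" unfolding L R using e1[of r] by simp
    moreover have "(N ** P) $ r $ 2 = (P ** T) $ r $ 2" unfolding L R using e2[of r] by simp
    moreover have "(N ** P) $ r $ 3 = (P ** T) $ r $ 3" unfolding L R using e3[of r] by simp
    ultimately show ?thesis by blast
  qed
  then have NP: "N ** P = P ** T" by (simp add: vec_eq_iff)
  have "N = N ** (P ** Q)" using Q by simp
  also have "\<dots> = P ** T ** Q" by (simp add: matrix_mul_assoc NP)
  finally show ?thesis using Q by blast
qed


section \<open>Normal forms\<close>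

lemma mv_delta:
  fixes A :: "'a::field^3^3"
  shows "(A *v (\<chi> k. if k = j then 1 else 0)) $ s = A $ s $ (j::3)"
proof -
  have "(A *v (\<chi> k. if k = j then 1 else 0)) $ s = (\<Sum>k\<in>UNIV. A $ s $ k * (if k = j then 1 else 0))"
    unfolding matrix_vector_mult_def by simp
  also have "\<dots> = (\<Sum>k\<in>UNIV. if k = j then A $ s $ j else (0::'a::field))"
    by (intro sum.cong) auto
  finally show ?thesis by simp
qed

lemma det_shift: "det (mat x - N) = x^3 - tr3 N * x^2 + c23 N * x - det (N::'a::field^3^3)"
  unfolding det_3 tr3_def c23_def
  by (simp add: mat_def algebra_simps power2_eq_square power3_eq_cube)

lemma eigvec:
  fixes N :: "'a::field^3^3"
  assumes "det (mat x - N) = 0"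
  shows "\<exists>v. v \<noteq> 0 \<and> N *v v = x *s v"
proof -
  have "\<not> inj ((*v) (mat x - N))"
    using det_nz_iff_inj_gen[of "(*v) (mat x - N)"] assms by simp
  then obtain y z where yz: "y \<noteq> z" "(mat x - N) *v y = (mat x - N) *v z" by (auto simp: inj_def)
  define v where "v = y - z"
  have "v \<noteq> 0" using yz by (simp add: v_def)
  moreover have "(mat x - N) *v v = 0" using yz by (simp add: v_def matrix_vector_mult_diff_distrib)
  then have "N *v v = x *s v"
    by (simp add: vec_eq_iff forall_3 matrix_vector_mult_def mat_def sum_3 algebra_simps)
  ultimately show ?thesis by blast
qed

lemma indep1:
  fixes N :: "'a::field^3^3"
  assumes "N *v v1 = l1 *s v1" "N *v v2 = l2 *s v2" "N *v v3 = l3 *s v3"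
    and "v1 \<noteq> 0" "l1 \<noteq> l2" "l1 \<noteq> l3"
    and z: "a1 *s v1 + a2 *s v2 + a3 *s v3 = 0"
  shows "a1 = 0"
proof -
  have z1: "(a1 * l1) *s v1 + (a2 * l2) *s v2 + (a3 * l3) *s v3 = 0"
    using arg_cong[OF z, of "\<lambda>x. N *v x"] assms(1-3)
    by (simp add: matrix_vector_right_distrib mv_smult vector_smult_assoc)
  have z2: "(a1 * l1 * l1) *s v1 + (a2 * l2 * l2) *s v2 + (a3 * l3 * l3) *s v3 = 0"
    using arg_cong[OF z1, of "\<lambda>x. N *v x"] assms(1-3)
    by (simp add: matrix_vector_right_distrib mv_smult vector_smult_assoc)
  have "a1 * (l1 - l2) * (l1 - l3) * v1 $ r = 0" for r
  proof -
    have e0: "a1 * v1$r + a2 * v2$r + a3 * v3$r = 0" using arg_cong[OF z, of "\<lambda>x. x $ r"] by simp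
    have e1: "a1 * l1 * v1$r + a2 * l2 * v2$r + a3 * l3 * v3$r = 0" using arg_cong[OF z1, of "\<lambda>x. x $ r"] by simp
    have e2: "a1 * l1 * l1 * v1$r + a2 * l2 * l2 * v2$r + a3 * l3 * l3 * v3$r = 0" using arg_cong[OF z2, of "\<lambda>x. x $ r"] by simp
    have "a1 * (l1 - l2) * (l1 - l3) * v1 $ r
        = (a1 * l1 * l1 * v1$r + a2 * l2 * l2 * v2$r + a3 * l3 * l3 * v3$r)
          - (l2 + l3) * (a1 * l1 * v1$r + a2 * l2 * v2$r + a3 * l3 * v3$r)
          + l2 * l3 * (a1 * v1$r + a2 * v2$r + a3 * v3$r)"
      by (simp add: algebra_simps)
    then show ?thesis using e0 e1 e2 by simp
  qed
  then have "a1 * v1 $ r = 0" for r using assms(5,6) by (metis mult.commute mult_eq_0_iff right_minus_eq)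
  moreover obtain r where "v1 $ r \<noteq> 0" using assms(4) by (auto simp: vec_eq_iff)
  ultimately show ?thesis by auto
qed

lemma sim_diag:
  fixes N :: "'a::field^3^3" and e \<mu> :: 'a
  assumes e: "e^3 = 1" "e \<noteq> 1"
    and N: "tr3 N = 0" "c23 N = 0" "det N = \<mu>^3" and mu: "\<mu> \<noteq> 0"
  shows "\<exists>P Q. P ** Q = mat 1 \<and> Q ** P = mat 1 \<and> N = P ** diag3 (\<lambda>i. \<mu> * om e i) ** Q"
proof -
  have ef: "1 + e + e^2 = 0" "e \<noteq> 0" "e^2 \<noteq> 1" "e^2 \<noteq> e" using eps_facts[OF e] by auto
  have dz: "det (mat (\<mu> * om e i) - N) = 0" for i
  proof -
    have e6: "e^6 = (1::'a)"
    proof -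
      have "e^6 = (e^3)^2" by (simp add: power_mult[symmetric])
      then show ?thesis using e(1) by simp
    qed
    have "(om e i)^3 = 1" using exhaust_3[of i]
      by (elim disjE) (simp_all add: e(1) e6)
    then show ?thesis using N by (simp add: det_shift power_mult_distrib)
  qed
  obtain v1 where v1: "v1 \<noteq> 0" "N *v v1 = (\<mu> * om e 1) *s v1" using eigvec[OF dz[of 1]] by blast
  obtain v2 where v2: "v2 \<noteq> 0" "N *v v2 = (\<mu> * om e 2) *s v2" using eigvec[OF dz[of 2]] by blast
  obtain v3 where v3: "v3 \<noteq> 0" "N *v v3 = (\<mu> * om e 3) *s v3" using eigvec[OF dz[of 3]] by blast
  have d12: "\<mu> * om e 1 \<noteq> \<mu> * om e 2"
  proof
    assume "\<mu> * om e 1 = \<mu> * om e 2"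
    then have "e = e^2" using mu by simp
    then show False using ef(4) by simp
  qed
  have d13: "\<mu> * om e 1 \<noteq> \<mu> * om e 3"
  proof
    assume "\<mu> * om e 1 = \<mu> * om e 3"
    then have "e = 1" using mu by simp
    then show False using e(2) by simp
  qed
  have d23: "\<mu> * om e 2 \<noteq> \<mu> * om e 3"
  proof
    assume "\<mu> * om e 2 = \<mu> * om e 3"
    then have "e^2 = 1" using mu by simp
    then show False using ef(3) by simp
  qed
  show ?thesis
  proof (rule sim_cols[of v1 v2 v3])
    fix a1 a2 a3 assume z: "a1 *s v1 + a2 *s v2 + a3 *s v3 = 0"
    have "a1 = 0" by (rule indep1[OF v1(2) v2(2) v3(2) v1(1) d12 d13 z])
    moreover have "a2 = 0"
      by (rule indep1[OF v2(2) v1(2) v3(2) v2(1) d12[symmetric] d23, of a2 a1 a3]) (use z in \<open>simp add: add_ac\<close>)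
    moreover have "a3 = 0"
      by (rule indep1[OF v3(2) v1(2) v2(2) v3(1) d13[symmetric] d23[symmetric], of a3 a1 a2]) (use z in \<open>simp add: add_ac\<close>)
    ultimately show "a1 = 0 \<and> a2 = 0 \<and> a3 = 0" by simp
  qed (simp_all add: v1 v2 v3)
qed

lemma sim_J:
  fixes N :: "'a::field^3^3"
  assumes N3: "N ** N ** N = 0" and N2: "N ** N \<noteq> 0"
  shows "\<exists>P Q. P ** Q = mat 1 \<and> Q ** P = mat 1 \<and> N = P ** (unit3 1 2 + unit3 2 3) ** Q"
proof -
  obtain r j where rj: "(N ** N) $ r $ j \<noteq> 0" using N2 by (auto simp: vec_eq_iff)
  define v :: "'a^3" where "v = (\<chi> k. if k = j then 1 else 0)"
  have Av: "(A *v v) $ s = A $ s $ j" for A :: "'a^3^3" and s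
    unfolding v_def by (rule mv_delta)
  define v1 where "v1 = N *v (N *v v)"
  define v2 where "v2 = N *v v"
  have v1nz: "v1 \<noteq> 0" using rj Av[of "N ** N" r] by (auto simp: v1_def matrix_vector_mul_assoc)
  have Nv1: "N *v v1 = 0"
    using N3 by (simp add: v1_def matrix_vector_mul_assoc matrix_mul_assoc)
  have Nv2: "N *v v2 = v1" by (simp add: v1_def v2_def)
  have NNv2: "N *v (N *v v2) = 0" using Nv1 Nv2 by simp
  show ?thesis
  proof (rule sim_cols[of v1 v2 v])
    fix a1 a2 a3 assume z: "a1 *s v1 + a2 *s v2 + a3 *s v = 0"
    have "N *v (N *v (a1 *s v1 + a2 *s v2 + a3 *s v)) = a3 *s v1"
      using Nv1 Nv2 by (simp add: matrix_vector_right_distrib mv_smult v1_def v2_def)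
    then have "a3 *s v1 = 0" using z by simp
    then have a3: "a3 = 0" using v1nz by (auto simp: vec_eq_iff)
    have "N *v (a1 *s v1 + a2 *s v2 + a3 *s v) = a2 *s v1"
      using Nv1 Nv2 a3 by (simp add: matrix_vector_right_distrib mv_smult)
    then have "a2 *s v1 = 0" using z by simp
    then have a2: "a2 = 0" using v1nz by (auto simp: vec_eq_iff)
    have "a1 *s v1 = 0" using z a2 a3 by simp
    then have "a1 = 0" using v1nz by (auto simp: vec_eq_iff)
    then show "a1 = 0 \<and> a2 = 0 \<and> a3 = 0" using a2 a3 by simp
  qed (simp_all add: Nv1 Nv2 v2_def[symmetric])
qed

lemma minors_zero:
  fixes N :: "'a::field^3^3"
  assumes t: "tr3 N = 0" and c: "c23 N = 0" and NN: "N ** N = 0"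
  shows "N$r$j * N$s$k = N$s$j * N$r$k"
proof -
  have z: "(N ** N) $ a $ b = 0" for a b using NN by simp
  have m0: "N$1$1*N$2$2 - N$2$1*N$1$2 = ((N**N)$3$3 - tr3 N * N$3$3 + c23 N)"
    by (simp add: matrix_matrix_mult_def sum_3 tr3_def c23_def algebra_simps)
  have m1: "N$1$1*N$2$3 - N$2$1*N$1$3 = - ((N**N)$2$3 - tr3 N * N$2$3)"
    by (simp add: matrix_matrix_mult_def sum_3 tr3_def c23_def algebra_simps)
  have m2: "N$1$2*N$2$3 - N$2$2*N$1$3 = ((N**N)$1$3 - tr3 N * N$1$3)"
    by (simp add: matrix_matrix_mult_def sum_3 tr3_def c23_def algebra_simps)
  have m3: "N$1$1*N$3$2 - N$3$1*N$1$2 = - ((N**N)$3$2 - tr3 N * N$3$2)"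
    by (simp add: matrix_matrix_mult_def sum_3 tr3_def c23_def algebra_simps)
  have m4: "N$1$1*N$3$3 - N$3$1*N$1$3 = ((N**N)$2$2 - tr3 N * N$2$2 + c23 N)"
    by (simp add: matrix_matrix_mult_def sum_3 tr3_def c23_def algebra_simps)
  have m5: "N$1$2*N$3$3 - N$3$2*N$1$3 = - ((N**N)$1$2 - tr3 N * N$1$2)"
    by (simp add: matrix_matrix_mult_def sum_3 tr3_def c23_def algebra_simps)
  have m6: "N$2$1*N$3$2 - N$3$1*N$2$2 = ((N**N)$3$1 - tr3 N * N$3$1)"
    by (simp add: matrix_matrix_mult_def sum_3 tr3_def c23_def algebra_simps)
  have m7: "N$2$1*N$3$3 - N$3$1*N$2$3 = - ((N**N)$2$1 - tr3 N * N$2$1)"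
    by (simp add: matrix_matrix_mult_def sum_3 tr3_def c23_def algebra_simps)
  have m8: "N$2$2*N$3$3 - N$3$2*N$2$3 = ((N**N)$1$1 - tr3 N * N$1$1 + c23 N)"
    by (simp add: matrix_matrix_mult_def sum_3 tr3_def c23_def algebra_simps)
  have d0: "N$1$1*N$2$2 - N$2$1*N$1$2 = 0" using m0 by (simp add: z t c)
  have d1: "N$1$1*N$2$3 - N$2$1*N$1$3 = 0" using m1 by (simp add: z t c)
  have d2: "N$1$2*N$2$3 - N$2$2*N$1$3 = 0" using m2 by (simp add: z t c)
  have d3: "N$1$1*N$3$2 - N$3$1*N$1$2 = 0" using m3 by (simp add: z t c)
  have d4: "N$1$1*N$3$3 - N$3$1*N$1$3 = 0" using m4 by (simp add: z t c)
  have d5: "N$1$2*N$3$3 - N$3$2*N$1$3 = 0" using m5 by (simp add: z t c)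
  have d6: "N$2$1*N$3$2 - N$3$1*N$2$2 = 0" using m6 by (simp add: z t c)
  have d7: "N$2$1*N$3$3 - N$3$1*N$2$3 = 0" using m7 by (simp add: z t c)
  have d8: "N$2$2*N$3$3 - N$3$2*N$2$3 = 0" using m8 by (simp add: z t c)
  define C :: "(3 \<times> 3) set" where "C = {(1,2),(1,3),(2,3)}"
  have can: "N$r$j * N$s$k = N$s$j * N$r$k" if "(r,s) \<in> C" "(j,k) \<in> C" for r s j k
  proof -
    have rs: "r = 1 \<and> s = 2 \<or> r = 1 \<and> s = 3 \<or> r = 2 \<and> s = 3"
      and jk: "j = 1 \<and> k = 2 \<or> j = 1 \<and> k = 3 \<or> j = 2 \<and> k = 3"
      using that unfolding C_def by simp_all
    have "N$r$j * N$s$k - N$s$j * N$r$k = 0"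
      using rs jk by (elim disjE conjE) (simp_all only: d0 d1 d2 d3 d4 d5 d6 d7 d8)
    then show ?thesis by simp
  qed
  have cs: "(r,s) \<in> C \<or> (s,r) \<in> C" if "r \<noteq> s" for r s :: 3
    using that exhaust_3[of r] exhaust_3[of s] unfolding C_def by (elim disjE) simp_all
  show ?thesis
  proof (cases "r = s \<or> j = k")
    case True then show ?thesis by (cases "r = s") (simp_all add: mult.commute)
  next
    case False
    then have "(r,s) \<in> C \<or> (s,r) \<in> C" "(j,k) \<in> C \<or> (k,j) \<in> C" using cs by auto
    then show ?thesis
    proof (elim disjE)
      assume a: "(r,s) \<in> C" and b: "(j,k) \<in> C"
      show ?thesis using can[OF a b] .
    next
      assume a: "(s,r) \<in> C" and b: "(j,k) \<in> C"
      show ?thesis using can[OF a b] by (rule sym)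
    next
      assume a: "(r,s) \<in> C" and b: "(k,j) \<in> C"
      have "N$r$j * N$s$k = N$s$k * N$r$j" by (rule mult.commute)
      also have "\<dots> = N$r$k * N$s$j" using can[OF a b] by (rule sym)
      also have "\<dots> = N$s$j * N$r$k" by (rule mult.commute)
      finally show ?thesis .
    next
      assume a: "(s,r) \<in> C" and b: "(k,j) \<in> C"
      have "N$r$j * N$s$k = N$s$k * N$r$j" by (rule mult.commute)
      also have "\<dots> = N$r$k * N$s$j" using can[OF a b] .
      also have "\<dots> = N$s$j * N$r$k" by (rule mult.commute)
      finally show ?thesis .
    qed
  qed
qed

lemma sim_R1:
  fixes N :: "'a::field^3^3"
  assumes NN: "N ** N = 0" and Nz: "N \<noteq> 0"
    and mn: "\<And>r s j k. N$r$j * N$s$k = N$s$j * N$r$k"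
  shows "\<exists>P Q. P ** Q = mat 1 \<and> Q ** P = mat 1 \<and> N = P ** unit3 1 2 ** Q"
proof -
  obtain r0 j0 where nz: "N $ r0 $ j0 \<noteq> 0" using Nz by (auto simp: vec_eq_iff)
  define ev :: "3 \<Rightarrow> 'a^3" where "ev j = (\<chi> k. if k = j then 1 else 0)" for j
  have Aev: "(A *v ev j) $ s = A $ s $ j" for A :: "'a^3^3" and s j
    unfolding ev_def by (rule mv_delta)
  define w where "w = N *v ev j0"
  have wc: "w $ s = N $ s $ j0" for s by (simp add: w_def Aev)
  have Nw: "N *v w = 0" using NN by (simp add: w_def matrix_vector_mul_assoc)
  have "\<exists>l. l \<noteq> j0 \<and> w $ l \<noteq> 0"
  proof (rule ccontr)
    assume "\<not> ?thesis"
    then have wl: "\<And>l. l \<noteq> j0 \<Longrightarrow> w $ l = 0" by auto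
    have "(N *v w) $ r0 = N $ r0 $ j0 * w $ j0"
    proof -
      have "(N *v w) $ r0 = (\<Sum>k\<in>UNIV. N $ r0 $ k * w $ k)"
        unfolding matrix_vector_mult_def by simp
      also have "\<dots> = (\<Sum>k\<in>UNIV. if k = j0 then N $ r0 $ j0 * w $ j0 else 0)"
        by (intro sum.cong) (auto simp: wl)
      finally show ?thesis by simp
    qed
    then have "N $ r0 $ j0 * w $ j0 = 0" using Nw by simp
    then show False using nz wc[of r0] wl[of r0] by (cases "r0 = j0") auto
  qed
  then obtain l where l: "l \<noteq> j0" "w $ l \<noteq> 0" by blast
  have "(1::3) \<notin> {j0, l} \<or> (2::3) \<notin> {j0, l} \<or> (3::3) \<notin> {j0, l}"
    using exhaust_3[of j0] exhaust_3[of l] by (elim disjE) simp_all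
  then obtain k where k: "k \<noteq> j0" "k \<noteq> l" by blast
  define \<alpha> where "\<alpha> = N $ r0 $ k / N $ r0 $ j0"
  define u where "u = ev k - \<alpha> *s ev j0"
  have Nu: "N *v u = 0"
  proof -
    have "(N *v u) $ s = N $ s $ k - \<alpha> * N $ s $ j0" for s
      by (simp add: u_def matrix_vector_mult_diff_distrib mv_smult Aev)
    moreover have "N $ s $ k = \<alpha> * N $ s $ j0" for s
      using mn[of r0 j0 s k] nz by (simp add: \<alpha>_def field_simps)
    ultimately show ?thesis by (simp add: vec_eq_iff)
  qed
  have uc: "u $ l = 0" "u $ k = 1" using l k by (auto simp: u_def ev_def)
  show ?thesis
  proof (rule sim_cols[of w "ev j0" u])
    fix a1 a2 a3 assume z: "a1 *s w + a2 *s ev j0 + a3 *s u = 0"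
    have "N *v (a1 *s w + a2 *s ev j0 + a3 *s u) = a2 *s w"
      using Nw Nu by (simp add: matrix_vector_right_distrib mv_smult w_def)
    then have "a2 *s w = 0" using z by simp
    then have a2: "a2 = 0" using l by (auto simp: vec_eq_iff)
    have "(a1 *s w + a2 *s ev j0 + a3 *s u) $ l = a1 * w $ l"
      using a2 uc by simp
    then have a1: "a1 = 0" using z l by simp
    have "(a1 *s w + a2 *s ev j0 + a3 *s u) $ k = a3"
      using a1 a2 uc by simp
    then have "a3 = 0" using z by simp
    then show "a1 = 0 \<and> a2 = 0 \<and> a3 = 0" using a1 a2 by simp
  qed (simp_all add: Nw Nu w_def[symmetric])
qed


section \<open>Clock-and-shift matrices\<close>

definition pa :: "'a::field \<Rightarrow> 3 \<Rightarrow> 3 \<Rightarrow> 'a^3^3" where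
  "pa e \<alpha> \<beta> = (\<chi> r s. if r = s + \<beta> then om e (\<alpha> * s) else 0)"

lemma pa_nth[simp]: "pa e \<alpha> \<beta> $ r $ s = (if r = s + \<beta> then om e (\<alpha> * s) else 0)"
  by (simp add: pa_def)

lemma sum_om:
  fixes e :: "'a::field"
  assumes e: "e^3 = 1" "e \<noteq> 1"
  shows "(\<Sum>\<alpha>\<in>UNIV. om e (\<alpha> * d)) = (if d = 0 then 3 else 0)"
proof -
  have ef: "1 + e + e^2 = 0" using eps_facts[OF e] by simp
  have "d = 1 \<or> d = 2 \<or> d = 3" by (rule exhaust_3)
  then show ?thesis
  proof (elim disjE)
    assume "d = 1" then show ?thesis using ef by (simp add: sum_3 add_ac)
  next
    assume "d = 2"
    have n: "(4::3) = 1" "(6::3) = 0" by simp_all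
    show ?thesis using ef \<open>d = 2\<close> by (simp add: sum_3 add_ac n)
  next
    assume "d = 3"
    have n: "(6::3) = 0" "(9::3) = 0" by simp_all
    show ?thesis using \<open>d = 3\<close> by (simp add: sum_3 n)
  qed
qed

lemma unit_pauli:
  fixes e :: "'a::field"
  assumes e: "e^3 = 1" "e \<noteq> 1" and three: "(3::'a) \<noteq> 0"
  shows "unit3 (i + \<beta>) i = (\<Sum>\<alpha>\<in>UNIV. smat (om e (- (\<alpha> * i)) / 3) (pa e \<alpha> \<beta>))"
proof -
  have "(\<Sum>\<alpha>\<in>UNIV. smat (om e (- (\<alpha> * i)) / 3) (pa e \<alpha> \<beta>)) $ r $ s = unit3 (i + \<beta>) i $ r $ s" for r s
  proof -
    have "(\<Sum>\<alpha>\<in>UNIV. smat (om e (- (\<alpha> * i)) / 3) (pa e \<alpha> \<beta>)) $ r $ s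
        = (\<Sum>\<alpha>\<in>UNIV. (if r = s + \<beta> then om e (\<alpha> * (s - i)) / 3 else 0))"
      unfolding sum_component smat_nth pa_nth
    proof (intro sum.cong refl)
      fix \<alpha> :: 3
      have "om e (- (\<alpha> * i)) * om e (\<alpha> * s) = om e (\<alpha> * (s - i))"
        by (simp add: om_add[OF e(1), symmetric] algebra_simps)
      then show "om e (- (\<alpha> * i)) / 3 * (if r = s + \<beta> then om e (\<alpha> * s) else 0)
          = (if r = s + \<beta> then om e (\<alpha> * (s - i)) / 3 else 0)"
        by simp
    qed
    also have "\<dots> = (if r = s + \<beta> then (\<Sum>\<alpha>\<in>UNIV. om e (\<alpha> * (s - i))) / 3 else 0)"
      by (simp add: sum_divide_distrib)
    also have "\<dots> = unit3 (i + \<beta>) i $ r $ s"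
      using three by (auto simp: sum_om[OF e] add.commute)
    finally show ?thesis .
  qed
  then show ?thesis by (simp add: vec_eq_iff)
qed

lemma pa_X:
  fixes e :: "'a::field"
  assumes e: "e^3 = 1"
  shows "diag3 (om e) ** pa e \<alpha> \<beta> ** diag3 (\<lambda>x. 1 / om e x) = smat (om e \<beta>) (pa e \<alpha> \<beta>)"
proof -
  have "om e r * om e (\<alpha> * s) * (1 / om e s) = om e \<beta> * om e (\<alpha> * s)" if "r = s + \<beta>" for r s
  proof -
    have "om e r = om e \<beta> * om e s" using that om_add[OF e, of s \<beta>] by (simp add: mult.commute add.commute)
    then show ?thesis using om_nz[OF e, of s] by simp
  qed
  then show ?thesis by (auto simp: vec_eq_iff)
qed

lemma pa_Y:
  fixes e :: "'a::field"
  assumes e: "e^3 = 1"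
  shows "Ymat ** pa e \<alpha> \<beta> ** Yinv = smat (om e (- \<alpha>)) (pa e \<alpha> \<beta>)"
proof -
  have "(Ymat ** pa e \<alpha> \<beta> ** Yinv) $ r $ s = smat (om e (- \<alpha>)) (pa e \<alpha> \<beta>) $ r $ s" for r s
  proof -
    have "om e (\<alpha> * (s - 1)) = om e (- \<alpha>) * om e (\<alpha> * s)"
      by (simp add: om_add[OF e, symmetric] algebra_simps)
    moreover have "(r - 1 = s - 1 + \<beta>) = (r = s + \<beta>)" by (auto simp: algebra_simps)
    ultimately show ?thesis by (simp add: Y_conj_nth)
  qed
  then show ?thesis by (simp add: vec_eq_iff)
qed


lemma exists_cyc:
  fixes c :: "(nat \<Rightarrow> nat) \<Rightarrow> 'a::field" and e :: 'a
  assumes e: "e^3 = 1" "e \<noteq> 1" and three: "(3::'a) \<noteq> 0"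
    and nz: "mlin_eval m c (\<lambda>k. unit3 (a k) (s0 k)) $ r $ s \<noteq> 0" and rs: "r \<noteq> s"
  shows "\<exists>A. tr3 (mlin_eval m c A) = 0 \<and> c23 (mlin_eval m c A) = 0 \<and> det (mlin_eval m c A) \<noteq> 0"
proof -
  define b where "b k = a k - s0 k" for k
  define B where "B = (\<Sum>k<m. b k)"
  have Bnz: "B \<noteq> 0" using unit_edge[OF e nz] rs by (auto simp: B_def b_def)
  have "\<exists>f. mlin_eval m c (\<lambda>k. pa e (f k) (b k)) \<noteq> 0"
  proof (rule ccontr)
    assume "\<not> ?thesis"
    then have base: "\<And>f. mlin_eval m c (\<lambda>k. pa e (f k) (b k)) \<in> {0}" by simp
    have "mlin_eval m c (\<lambda>k. unit3 (a k) (s0 k)) \<in> {0}"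
    proof (rule mlin_span[where gen = "\<lambda>k \<alpha>. pa e \<alpha> (b k)", OF _ _ _ _ base])
      fix k
      have "unit3 (a k) (s0 k) = (unit3 (s0 k + b k) (s0 k) :: 'a^3^3)" by (simp add: b_def)
      then have "unit3 (a k) (s0 k) = (\<Sum>g\<in>UNIV. smat (om e (- (g * s0 k)) / 3) (pa e g (b k)))"
        using unit_pauli[OF e three, of "s0 k" "b k"] by simp
      then show "\<exists>w. unit3 (a k) (s0 k) = (\<Sum>g\<in>UNIV. smat (w g) (pa e g (b k)))"
        by (rule exI[where x = "\<lambda>g. om e (- (g * s0 k)) / 3"])
    qed auto
    then show False using nz by simp
  qed
  then obtain f where Onz: "mlin_eval m c (\<lambda>k. pa e (f k) (b k)) \<noteq> 0" by blast
  define O' where "O' = mlin_eval m c (\<lambda>k. pa e (f k) (b k))"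
  have OX: "diag3 (om e) ** O' ** diag3 (\<lambda>x. 1 / om e x) = smat (om e B) O'"
  proof -
    have "diag3 (om e) ** O' ** diag3 (\<lambda>x. 1 / om e x)
        = mlin_eval m c (\<lambda>k. diag3 (om e) ** pa e (f k) (b k) ** diag3 (\<lambda>x. 1 / om e x))"
      unfolding O'_def by (rule mlin_conj[symmetric]) (use diag3_inv[OF om_nz[OF e(1)]] in auto)
    also have "\<dots> = smat (\<Prod>k<m. om e (b k)) O'"
      by (simp add: pa_X[OF e(1)] mlin_scale O'_def)
    finally show ?thesis by (simp add: om_sum[OF e(1)] B_def)
  qed
  have edge: "x = y + B" if "O' $ x $ y \<noteq> 0" for x y
  proof -
    have "om e x * O' $ x $ y * (1 / om e y) = om e B * O' $ x $ y"
      using arg_cong[OF OX, of "\<lambda>X. X $ x $ y"] by simp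
    then have "om e x / om e y = om e B" using that om_nz[OF e(1), of y] by (simp add: field_simps)
    then have "om e (x - y) = om e B" by (simp add: om_diff[OF e(1)])
    then have "x - y = B" using om_inj[OF e] by blast
    then show ?thesis by (simp add: algebra_simps)
  qed
  define \<rho> where "\<rho> = (\<Prod>k<m. om e (- f k))"
  have rho: "\<rho> \<noteq> 0" unfolding \<rho>_def using om_nz[OF e(1)] by (simp add: prod_zero_iff)
  have OY: "Ymat ** O' ** Yinv = smat \<rho> O'"
  proof -
    have "Ymat ** O' ** Yinv = mlin_eval m c (\<lambda>k. Ymat ** pa e (f k) (b k) ** Yinv)"
      unfolding O'_def by (rule mlin_conj[symmetric]) (rule Y_inv)+
    also have "\<dots> = smat \<rho> O'"
      by (simp add: pa_Y[OF e(1)] mlin_scale O'_def \<rho>_def)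
    finally show ?thesis .
  qed
  have shift: "O' $ (x - 1) $ (y - 1) = \<rho> * O' $ x $ y" for x y
    using arg_cong[OF OY, of "\<lambda>X. X $ x $ y"] by simp
  obtain x0 y0 where xy0: "O' $ x0 $ y0 \<noteq> 0" using Onz by (auto simp: O'_def vec_eq_iff)
  have x0: "x0 = y0 + B" using edge[OF xy0] .
  have nz0: "O' $ (y0 + B) $ y0 \<noteq> 0" using xy0 x0 by simp
  have nz1: "O' $ (y0 - 1 + B) $ (y0 - 1) \<noteq> 0"
    using shift[of "y0 + B" y0] nz0 rho by (simp add: algebra_simps)
  have nz2: "O' $ (y0 - 1 - 1 + B) $ (y0 - 1 - 1) \<noteq> 0"
    using shift[of "y0 - 1 + B" "y0 - 1"] nz1 rho by (simp add: algebra_simps)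
  have allnz: "O' $ (y + B) $ y \<noteq> 0" for y
  proof -
    have "y = y0 \<or> y = y0 - 1 \<or> y = y0 - 1 - 1"
      using exhaust_3[of y] exhaust_3[of y0] by (elim disjE) simp_all
    then show ?thesis using nz0 nz1 nz2 by (elim disjE) simp_all
  qed
  have zer: "O' $ x $ y = 0" if "x \<noteq> y + B" for x y using edge that by blast
  have n45: "(4::3) = 1" "(5::3) = 2" by simp_all
  have "B = 1 \<or> B = 2" using exhaust_3[of B] Bnz by (elim disjE) simp_all
  then have "tr3 O' = 0 \<and> c23 O' = 0 \<and> det O' \<noteq> 0"
  proof (elim disjE)
    assume B1: "B = 1"
    have n: "O' $ 2 $ 1 \<noteq> 0" "O' $ 3 $ 2 \<noteq> 0" "O' $ 1 $ 3 \<noteq> 0"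
      using allnz[of 1] allnz[of 2] allnz[of 3] B1 n45 by simp_all
    have z: "O'$1$1 = 0" "O'$2$2 = 0" "O'$3$3 = 0" "O'$1$2 = 0" "O'$2$3 = 0" "O'$3$1 = 0"
      using zer B1 by simp_all
    show ?thesis using n by (simp add: tr3_def c23_def det_3 z)
  next
    assume B2: "B = 2"
    have n: "O' $ 3 $ 1 \<noteq> 0" "O' $ 1 $ 2 \<noteq> 0" "O' $ 2 $ 3 \<noteq> 0"
      using allnz[of 1] allnz[of 2] allnz[of 3] B2 n45 by simp_all
    have z: "O'$1$1 = 0" "O'$2$2 = 0" "O'$3$3 = 0" "O'$2$1 = 0" "O'$3$2 = 0" "O'$1$3 = 0"
      using zer B2 by simp_all
    show ?thesis using n by (simp add: tr3_def c23_def det_3 z)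
  qed
  then show ?thesis unfolding O'_def by blast
qed

lemma cube_root:
  fixes d :: "'a::alg_closed_field"
  shows "\<exists>\<mu>. \<mu>^3 = d"
proof -
  have "degree [:-d, 0, 0, 1:] = 3" by simp
  then obtain x where "poly [:-d, 0, 0, 1:] x = 0"
    using alg_closed_imp_poly_has_root[of "[:-d, 0, 0, 1:]"] by auto
  then have "x^3 = d" by (simp add: algebra_simps power3_eq_cube)
  then show ?thesis by blast
qed

lemma ts_data:
  fixes e :: "'a::field" and M :: "'a^3^3"
  assumes e: "e^3 = 1" "e \<noteq> 1" and ts: "three_scalar e M"
  shows "\<exists>\<gamma>. tr3 M = 0 \<and> c23 M = 0 \<and> det M = \<gamma>^3"
proof -
  obtain \<gamma> where g: "charpoly3 M = (\<Prod>k<3. [: -(\<gamma> * e ^ k), 1 :])"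
    using ts unfolding three_scalar_def by blast
  have ef: "1 + e + e^2 = 0" using eps_facts[OF e] by simp
  have P: "x^3 - tr3 M * x^2 + c23 M * x - det M = x^3 - \<gamma>^3" for x
  proof -
    have "x^3 - tr3 M * x^2 + c23 M * x - det M = poly (charpoly3 M) x" by (simp add: charpoly_eval)
    also have "\<dots> = (\<Prod>k<3. x - \<gamma> * e ^ k)" unfolding g by (simp add: poly_prod)
    also have "\<dots> = (x - \<gamma>) * (x - \<gamma> * e) * (x - \<gamma> * e^2)"
      by (simp add: numeral_3_eq_3 lessThan_Suc power2_eq_square)
    also have "\<dots> = x^3 - \<gamma> * (1 + e + e^2) * x^2 + \<gamma>^2 * e * (1 + e + e^2) * x - \<gamma>^3 * e^3"
      by (simp add: algebra_simps power2_eq_square power3_eq_cube)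
    also have "\<dots> = x^3 - \<gamma>^3" using ef e(1) by simp
    finally show ?thesis .
  qed
  have d: "det M = \<gamma>^3" using P[of 0] by simp
  have c: "c23 M = tr3 M" using P[of 1] d by (simp add: algebra_simps)
  have "tr3 M * (e * (1 - e)) = 0"
    using P[of e] d c by (simp add: algebra_simps power2_eq_square)
  then have t: "tr3 M = 0" using e(2) eps_facts(2)[OF e] by simp
  show ?thesis using t c d by auto
qed


lemma img_conj:
  assumes "X \<in> range (mlin_eval m c)" "G ** H = mat 1" "H ** G = mat 1"
  shows "G ** X ** H \<in> range (mlin_eval m c)"
proof -
  obtain A where "X = mlin_eval m c A" using assms(1) by blast
  then have "G ** X ** H = mlin_eval m c (\<lambda>k. G ** A k ** H)"
    by (simp add: mlin_conj[OF assms(2,3)])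
  then show ?thesis by blast
qed

lemma img_smat:
  assumes "0 < m" "X \<in> range (mlin_eval m c)"
  shows "smat t X \<in> range (mlin_eval m c)"
proof -
  obtain A where X: "X = mlin_eval m c A" using assms(2) by blast
  have "mlin_eval m c (\<lambda>j. if j = 0 then smat t (A 0) else A j)
      = smat t (mlin_eval m c (\<lambda>j. if j = 0 then A 0 else A j))"
    by (rule mlin_scale1[OF assms(1)])
  also have "(\<lambda>j. if j = 0 then A 0 else A j) = A" by auto
  finally show ?thesis using X by (metis rangeI)
qed

lemma img_sim:
  fixes T :: "'a::field^3^3"
  assumes N: "N \<in> range (mlin_eval m c)"
    and PQ1: "P1 ** Q1 = mat 1" "Q1 ** P1 = mat 1" and N1: "N = P1 ** T ** Q1"
    and PQ2: "P2 ** Q2 = mat 1" "Q2 ** P2 = mat 1" and M2: "M = P2 ** T ** Q2"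
  shows "M \<in> range (mlin_eval m c)"
proof -
  have i1: "(P2 ** Q1) ** (P1 ** Q2) = mat 1"
  proof -
    have "(P2 ** Q1) ** (P1 ** Q2) = P2 ** (Q1 ** P1) ** Q2" by (simp add: matrix_mul_assoc)
    then show ?thesis using PQ1 PQ2 by simp
  qed
  have i2: "(P1 ** Q2) ** (P2 ** Q1) = mat 1"
  proof -
    have "(P1 ** Q2) ** (P2 ** Q1) = P1 ** (Q2 ** P2) ** Q1" by (simp add: matrix_mul_assoc)
    then show ?thesis using PQ1 PQ2 by simp
  qed
  have "(P2 ** Q1) ** N ** (P1 ** Q2) = P2 ** (Q1 ** P1) ** T ** (Q1 ** P1) ** Q2"
    unfolding N1 by (simp add: matrix_mul_assoc)
  also have "\<dots> = M" using PQ1 M2 by simp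
  finally show ?thesis using img_conj[OF N i1 i2] by simp
qed

theorem lemma3p7:
  fixes \<epsilon> :: "'a::alg_closed_field"
    and m :: nat and c :: "(nat \<Rightarrow> nat) \<Rightarrow> 'a"
    and M :: "'a^3^3"
  assumes "(of_nat 3 :: 'a) \<noteq> 0"
    and "\<epsilon> ^ 3 = 1" and "\<epsilon> \<noteq> 1"
    and "\<not> is_PI m c" and "\<not> is_central m c"
    and "three_scalar \<epsilon> M"
  shows "M \<in> image_poly m c"
proof -
  have e: "\<epsilon>^3 = 1" "\<epsilon> \<noteq> 1" using assms(2,3) by auto
  have three: "(3::'a) \<noteq> 0" using assms(1) by simp
  have npi: "\<not> is_PI m c" and nce: "\<not> is_central m c" using assms(4,5) by auto
  have m0: "0 < m"
  proof (rule ccontr)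
    assume "\<not> 0 < m"
    then have "m = 0" by simp
    then have "\<forall>A :: nat \<Rightarrow> 'a^3^3. \<exists>s. mlin_eval m c A = mat s" using mlin_m0 by blast
    then show False using npi nce unfolding is_central_def by blast
  qed
  obtain f :: "nat \<Rightarrow> 3 \<times> 3" where nd: "\<not> is_diag (mlin_eval m c (\<lambda>k. unit3 (fst (f k)) (snd (f k))))"
    using exists_unit_nondiag[OF npi nce] by blast
  define a where "a k = fst (f k)" for k
  define s0 where "s0 k = snd (f k)" for k
  define U where "U = mlin_eval m c (\<lambda>k. unit3 (a k) (s0 k))"
  obtain r s where rs: "r \<noteq> s" and Unz: "U $ r $ s \<noteq> 0"
    using nd unfolding is_diag_def U_def a_def s0_def by blast
  have Urange: "U \<in> range (mlin_eval m c)" unfolding U_def by blast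
  obtain \<gamma> where Md: "tr3 M = 0" "c23 M = 0" "det M = \<gamma>^3"
    using ts_data[OF e assms(6)] by blast
  have goal: "M \<in> range (mlin_eval m c)"
  proof (cases "\<gamma> = 0")
    case False
    obtain A0 where A0: "tr3 (mlin_eval m c A0) = 0" "c23 (mlin_eval m c A0) = 0"
      "det (mlin_eval m c A0) \<noteq> 0"
      using exists_cyc[OF e three Unz[unfolded U_def] rs] by blast
    define O' where "O' = mlin_eval m c A0"
    obtain \<mu> where mu: "\<mu>^3 = det O'" using cube_root by blast
    have munz: "\<mu> \<noteq> 0" using mu A0(3) O'_def by auto
    obtain P1 Q1 where PQ1: "P1 ** Q1 = mat 1" "Q1 ** P1 = mat 1"
      and O1: "O' = P1 ** diag3 (\<lambda>i. \<mu> * om \<epsilon> i) ** Q1"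
      using sim_diag[OF e A0(1,2)[folded O'_def] mu[symmetric] munz] by blast
    obtain P2 Q2 where PQ2: "P2 ** Q2 = mat 1" "Q2 ** P2 = mat 1"
      and M2: "M = P2 ** diag3 (\<lambda>i. \<gamma> * om \<epsilon> i) ** Q2"
      using sim_diag[OF e Md False] by blast
    have Nr: "smat (\<gamma> / \<mu>) O' \<in> range (mlin_eval m c)"
      by (rule img_smat[OF m0]) (simp add: O'_def)
    have dg: "smat (\<gamma> / \<mu>) (diag3 (\<lambda>i. \<mu> * om \<epsilon> i)) = diag3 (\<lambda>i. \<gamma> * om \<epsilon> i)"
      using munz by (simp add: vec_eq_iff)
    have "smat (\<gamma> / \<mu>) O' = P1 ** diag3 (\<lambda>i. \<gamma> * om \<epsilon> i) ** Q1"
      unfolding O1 dg[symmetric] by (simp add: smat_mult_left smat_mult_right)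
    then show ?thesis using img_sim[OF Nr PQ1 _ PQ2 M2] by blast
  next
    case True
    have Mdet: "det M = 0" using Md(3) True by simp
    have M3: "M ** M ** M = 0"
      using cayley_hamilton[of M] Md(1,2) Mdet by (simp add: vec_eq_iff mat_def)
    show ?thesis
    proof (cases "M ** M = 0")
      case False
      obtain A1 where A1: "mlin_eval m c A1 ** mlin_eval m c A1 ** mlin_eval m c A1 = 0"
        "mlin_eval m c A1 ** mlin_eval m c A1 \<noteq> 0"
        using exists_two_edge[OF e Unz[unfolded U_def] rs] by blast
      obtain P1 Q1 where PQ1: "P1 ** Q1 = mat 1" "Q1 ** P1 = mat 1"
        and N1: "mlin_eval m c A1 = P1 ** (unit3 1 2 + unit3 2 3) ** Q1"
        using sim_J[OF A1] by blast
      obtain P2 Q2 where PQ2: "P2 ** Q2 = mat 1" "Q2 ** P2 = mat 1"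
        and M2: "M = P2 ** (unit3 1 2 + unit3 2 3) ** Q2"
        using sim_J[OF M3 False] by blast
      show ?thesis using img_sim[OF _ PQ1 N1 PQ2 M2] by blast
    next
      case MM: True
      show ?thesis
      proof (cases "M = 0")
        case True
        have "smat 0 U \<in> range (mlin_eval m c)" by (rule img_smat[OF m0 Urange])
        then show ?thesis using True by simp
      next
        case False
        have Ueq: "U = smat (U $ r $ s) (unit3 r s)"
          unfolding U_def by (rule unit_single_mat[OF e Unz[unfolded U_def] rs])
        have UU: "U ** U = 0"
          by (subst Ueq, subst Ueq) (simp add: smat_mult_left smat_mult_right unit_mult rs[symmetric])
        have Unz': "U \<noteq> 0" using Unz by auto
        have Umn: "U$p$j * U$q$k = U$q$j * U$p$k" for p q j k
          by (subst (1 2 3 4) Ueq) simp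
        obtain P1 Q1 where PQ1: "P1 ** Q1 = mat 1" "Q1 ** P1 = mat 1"
          and N1: "U = P1 ** unit3 1 2 ** Q1"
          using sim_R1[OF UU Unz' Umn] by blast
        have Mmn: "M$p$j * M$q$k = M$q$j * M$p$k" for p q j k
          by (rule minors_zero[OF Md(1,2) MM])
        obtain P2 Q2 where PQ2: "P2 ** Q2 = mat 1" "Q2 ** P2 = mat 1"
          and M2: "M = P2 ** unit3 1 2 ** Q2"
          using sim_R1[OF MM False Mmn] by blast
        show ?thesis using img_sim[OF Urange PQ1 N1 PQ2 M2] .
      qed
    qed
  qed
  then show ?thesis unfolding image_poly_def .
qed

end
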